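(* There exists an absolute constant $C>0$ such that the following holds. Let $d,N,L\in\mathbb{N}$, let $W^{(0)}\in\mathbb{R}^{N\times d}$, $W^{(\ell)}\in\mathbb{R}^{N\times N}$ ($1\le\ell\le L-1$) and $b^{(0)},\dots,b^{(L-1)}\in\mathbb{R}^N$ be fixed, and set $\Lambda=\|W^{(L-1)}\|_2\cdots\|W^{(0)}\|_2$. For $x\in\mathbb{R}^d$ and $z\in\overline{B}_d(0,1)$ let $Y_{z,x}=D^{(L-1)}(x)W^{(L-1)}\cdots D^{(0)}(x)W^{(0)}z\in\mathbb{R}^N$ and $\mathcal{L}=\{Y_{z,x}:x\in\mathbb{R}^d,z\in\overline{B}_d(0,1)\}$. Let $W^{(L)}\in\mathbb{R}^{1\times N}$ have i.i.d. $\mathcal{N}(0,1)$ entries. Then for every $u\ge0$, with probability at least $1-2\exp(-u^2)$, $$\sup_{x\in\mathbb{R}^d}\|W^{(L)}D^{(L-1)}(x)W^{(L-1)}\cdots D^{(0)}(x)W^{(0)}\|_2\le C\Big(\int_0^\Lambda\sqrt{\ln\mathcal{N}(\mathcal{L},\|\cdot\|_2,\varepsilon)}\,d\varepsilon+u\Lambda\Big),$$ and moreover $$\mathbb{E}_{W^{(L)}}\Big[\sup_{x\in\mathbb{R}^d}\|W^{(L)}D^{(L-1)}(x)W^{(L-1)}\cdots D^{(0)}(x)W^{(0)}\|_2\Big]\le C\int_0^\Lambda\sqrt{\ln\mathcal{N}(\mathcal{L},\|\cdot\|_2,\varepsilon)}\,d\varepsilon.$$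
   Context: For $v\in\mathbb{R}^N$, $\Delta(v)$ is the $N\times N$ diagonal matrix with diagonal entries $\mathbb{1}_{v_i>0}$. For $x\in\mathbb{R}^d$ set $x^{(0)}=x$ and recursively $D^{(\ell)}(x)=\Delta(W^{(\ell)}x^{(\ell)}+b^{(\ell)})$, $x^{(\ell+1)}=\mathrm{ReLU}(W^{(\ell)}x^{(\ell)}+b^{(\ell)})$ for $0\le\ell<L$, with $\mathrm{ReLU}(t)=\max\{0,t\}$ componentwise. Matrix norms $\|\cdot\|_2$ are operator norms (Euclidean). $\overline{B}_d(0,1)$ is the closed Euclidean unit ball. $\mathcal{N}(T,\|\cdot\|_2,\varepsilon)$ is the smallest number of closed $\varepsilon$-balls centered at points of $T$ needed to cover $T$. *)

theory Defs
  imports "HOL-Analysis.Analysis" "HOL-Probability.Probability"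
begin

text \<open>Vectors of R^n are functions nat => real vanishing at indices >= n;
  matrices are functions nat => nat => real, only entries with in-range indices matter.\<close>

definition Rn :: "nat \<Rightarrow> (nat \<Rightarrow> real) set" where
  "Rn n = {x. \<forall>i\<ge>n. x i = 0}"

definition vnorm :: "nat \<Rightarrow> (nat \<Rightarrow> real) \<Rightarrow> real" where
  "vnorm n x = sqrt (\<Sum>i<n. (x i)\<^sup>2)"

definition unit_cball :: "nat \<Rightarrow> (nat \<Rightarrow> real) set" where
  "unit_cball n = {z \<in> Rn n. vnorm n z \<le> 1}"

definition mv :: "nat \<Rightarrow> nat \<Rightarrow> (nat \<Rightarrow> nat \<Rightarrow> real) \<Rightarrow> (nat \<Rightarrow> real) \<Rightarrow> (nat \<Rightarrow> real)" where
  "mv m n A x = (\<lambda>i. if i < m then (\<Sum>j<n. A i j * x j) else 0)"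

definition mm :: "nat \<Rightarrow> nat \<Rightarrow> nat \<Rightarrow> (nat \<Rightarrow> nat \<Rightarrow> real) \<Rightarrow> (nat \<Rightarrow> nat \<Rightarrow> real) \<Rightarrow> (nat \<Rightarrow> nat \<Rightarrow> real)" where
  "mm m k n A B = (\<lambda>i j. if i < m \<and> j < n then (\<Sum>l<k. A i l * B l j) else 0)"

definition opnorm :: "nat \<Rightarrow> nat \<Rightarrow> (nat \<Rightarrow> nat \<Rightarrow> real) \<Rightarrow> real" where
  "opnorm m n A = Sup ((\<lambda>z. vnorm m (mv m n A z)) ` unit_cball n)"

definition Delta :: "nat \<Rightarrow> (nat \<Rightarrow> real) \<Rightarrow> (nat \<Rightarrow> nat \<Rightarrow> real)" where
  "Delta N v = (\<lambda>i j. if i < N \<and> i = j \<and> v i > 0 then 1 else 0)"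

definition indim :: "nat \<Rightarrow> nat \<Rightarrow> nat \<Rightarrow> nat" where
  "indim d N l = (if l = 0 then d else N)"

fun act :: "nat \<Rightarrow> nat \<Rightarrow> (nat \<Rightarrow> nat \<Rightarrow> nat \<Rightarrow> real) \<Rightarrow> (nat \<Rightarrow> nat \<Rightarrow> real)
    \<Rightarrow> (nat \<Rightarrow> real) \<Rightarrow> nat \<Rightarrow> (nat \<Rightarrow> real)" where
  "act d N W b x 0 = x"
| "act d N W b x (Suc l) =
     (\<lambda>i. if i < N then max 0 (mv N (indim d N l) (W l) (act d N W b x l) i + b l i) else 0)"

definition preact :: "nat \<Rightarrow> nat \<Rightarrow> (nat \<Rightarrow> nat \<Rightarrow> nat \<Rightarrow> real) \<Rightarrow> (nat \<Rightarrow> nat \<Rightarrow> real)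
    \<Rightarrow> (nat \<Rightarrow> real) \<Rightarrow> nat \<Rightarrow> (nat \<Rightarrow> real)" where
  "preact d N W b x l = (\<lambda>i. if i < N then mv N (indim d N l) (W l) (act d N W b x l) i + b l i else 0)"

definition Dmat :: "nat \<Rightarrow> nat \<Rightarrow> (nat \<Rightarrow> nat \<Rightarrow> nat \<Rightarrow> real) \<Rightarrow> (nat \<Rightarrow> nat \<Rightarrow> real)
    \<Rightarrow> (nat \<Rightarrow> real) \<Rightarrow> nat \<Rightarrow> (nat \<Rightarrow> nat \<Rightarrow> real)" where
  "Dmat d N W b x l = Delta N (preact d N W b x l)"

text \<open>netmat ... x k = D^(k-1)(x) W^(k-1) ... D^(0)(x) W^(0), an N x d matrix (k >= 1;
  the value for k = 0 is never used)\<close>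
fun netmat :: "nat \<Rightarrow> nat \<Rightarrow> (nat \<Rightarrow> nat \<Rightarrow> nat \<Rightarrow> real) \<Rightarrow> (nat \<Rightarrow> nat \<Rightarrow> real)
    \<Rightarrow> (nat \<Rightarrow> real) \<Rightarrow> nat \<Rightarrow> (nat \<Rightarrow> nat \<Rightarrow> real)" where
  "netmat d N W b x 0 = (\<lambda>i j. 0)"
| "netmat d N W b x (Suc 0) = mm N N d (Dmat d N W b x 0) (W 0)"
| "netmat d N W b x (Suc (Suc l)) =
     mm N N d (Dmat d N W b x (Suc l)) (mm N N d (W (Suc l)) (netmat d N W b x (Suc l)))"

definition covnum :: "nat \<Rightarrow> (nat \<Rightarrow> real) set \<Rightarrow> real \<Rightarrow> nat" where
  "covnum n T eps = (LEAST k. \<exists>F. finite F \<and> F \<subseteq> T \<and> card F = k \<and>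
      T \<subseteq> (\<Union>c\<in>F. {y. vnorm n (\<lambda>i. y i - c i) \<le> eps}))"

definition gauss_vec :: "nat \<Rightarrow> (nat \<Rightarrow> real) measure" where
  "gauss_vec N = PiM {..<N} (\<lambda>_. density lborel std_normal_density)"

end

theory Submission
  imports Defs
begin

definition lin :: "nat \<Rightarrow> (nat \<Rightarrow> real) \<Rightarrow> (nat \<Rightarrow> real) \<Rightarrow> real" where
  "lin N v w = (\<Sum>i<N. w i * v i)"

lemma mgf_std: "(\<integral>\<^sup>+x. ennreal (exp (a*x)) \<partial>std_normal_distribution) = ennreal (exp (a\<^sup>2/2))"
proof -
  have "(\<integral>\<^sup>+x. ennreal (exp (a*x)) \<partial>std_normal_distribution)
     = (\<integral>\<^sup>+x. ennreal (std_normal_density x) * ennreal (exp (a*x)) \<partial>lborel)"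
    by (rule nn_integral_density) auto
  also have "\<dots> = (\<integral>\<^sup>+x. ennreal (exp (a\<^sup>2/2)) * ennreal (normal_density a 1 x) \<partial>lborel)"
  proof (rule nn_integral_cong)
    fix x :: real
    have "std_normal_density x * exp (a*x) = exp (a\<^sup>2/2) * normal_density a 1 x"
      unfolding normal_density_def
      by (simp add: exp_add[symmetric] power2_eq_square algebra_simps diff_divide_distrib add_divide_distrib)
    then show "ennreal (std_normal_density x) * ennreal (exp (a*x)) = ennreal (exp (a\<^sup>2/2)) * ennreal (normal_density a 1 x)"
      by (simp add: ennreal_mult'[symmetric] ennreal_mult[symmetric])
  qed
  also have "\<dots> = ennreal (exp (a\<^sup>2/2)) * (\<integral>\<^sup>+x. ennreal (normal_density a 1 x) \<partial>lborel)"
    by (rule nn_integral_cmult) auto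
  also have "(\<integral>\<^sup>+x. ennreal (normal_density a 1 x) \<partial>lborel) = 1"
  proof -
    interpret prob_space "density lborel (normal_density a 1)" by (rule prob_space_normal_density) simp
    have "emeasure (density lborel (normal_density a 1)) UNIV = 1"
      using emeasure_space_1 by simp
    then show ?thesis by (simp add: emeasure_density)
  qed
  finally show ?thesis by simp
qed

lemma gauss_prob: "prob_space (gauss_vec N)"
  unfolding gauss_vec_def by (intro prob_space_PiM) (simp add: prob_space_normal_density)

lemma lin_meas[measurable]: "lin N v \<in> borel_measurable (gauss_vec N)"
  unfolding lin_def gauss_vec_def by measurable

lemma mgf_lin: "(\<integral>\<^sup>+w. ennreal (exp (a * lin N v w)) \<partial>gauss_vec N) = ennreal (exp (a\<^sup>2 * (\<Sum>i<N. (v i)\<^sup>2) / 2))"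
proof -
  interpret product_prob_space "\<lambda>_::nat. std_normal_distribution"
    by (intro product_prob_spaceI prob_space_normal_density) simp
  have "(\<integral>\<^sup>+w. ennreal (exp (a * lin N v w)) \<partial>gauss_vec N)
      = (\<integral>\<^sup>+w. (\<Prod>i<N. ennreal (exp (a * v i * w i))) \<partial>gauss_vec N)"
  proof (rule nn_integral_cong)
    fix w :: "nat \<Rightarrow> real"
    have "exp (a * lin N v w) = (\<Prod>i<N. exp (a * v i * w i))"
      unfolding lin_def by (simp add: exp_sum sum_distrib_left mult_ac)
    then show "ennreal (exp (a * lin N v w)) = (\<Prod>i<N. ennreal (exp (a * v i * w i)))"
      by (simp add: prod_ennreal)
  qed
  also have "\<dots> = (\<Prod>i<N. \<integral>\<^sup>+x. ennreal (exp (a * v i * x)) \<partial>std_normal_distribution)"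
    unfolding gauss_vec_def by (rule product_nn_integral_prod) auto
  also have "\<dots> = (\<Prod>i<N. ennreal (exp ((a * v i)\<^sup>2/2)))"
    by (simp add: mgf_std)
  also have "\<dots> = ennreal (\<Prod>i<N. exp ((a * v i)\<^sup>2/2))"
    by (simp add: prod_ennreal)
  also have "(\<Prod>i<N. exp ((a * v i)\<^sup>2/2)) = exp (a\<^sup>2 * (\<Sum>i<N. (v i)\<^sup>2) / 2)"
    by (simp add: exp_sum[symmetric] sum_divide_distrib sum_distrib_left power_mult_distrib)
  finally show ?thesis .
qed

lemma tail_lin:
  assumes sig: "\<sigma> > 0" and v: "(\<Sum>i<N. (v i)\<^sup>2) \<le> \<sigma>\<^sup>2" and s: "s \<ge> 0"
  shows "emeasure (gauss_vec N) {w \<in> space (gauss_vec N). lin N v w > \<sigma> * s} \<le> ennreal (exp (- s\<^sup>2 / 2))"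
proof -
  define a where "a = s / \<sigma>"
  have a0: "a \<ge> 0" using sig s by (simp add: a_def)
  let ?A = "{w \<in> space (gauss_vec N). lin N v w > \<sigma> * s}"
  have "emeasure (gauss_vec N) ?A = (\<integral>\<^sup>+w. indicator ?A w \<partial>gauss_vec N)"
    by (rule nn_integral_indicator[symmetric]) measurable
  also have "\<dots> \<le> (\<integral>\<^sup>+w. ennreal (exp (- a * \<sigma> * s)) * ennreal (exp (a * lin N v w)) \<partial>gauss_vec N)"
  proof (rule nn_integral_mono)
    fix w
    show "indicator ?A w \<le> ennreal (exp (- a * \<sigma> * s)) * ennreal (exp (a * lin N v w))"
    proof (cases "w \<in> ?A")
      case True
      then have "a * (\<sigma> * s) \<le> a * lin N v w" using a0 by (intro mult_left_mono) auto
      then have "1 \<le> exp (- a * \<sigma> * s) * exp (a * lin N v w)"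
        by (simp add: exp_add[symmetric])
      then show ?thesis using True by (simp add: ennreal_mult[symmetric])
    qed simp
  qed
  also have "\<dots> = ennreal (exp (- a * \<sigma> * s)) * ennreal (exp (a\<^sup>2 * (\<Sum>i<N. (v i)\<^sup>2) / 2))"
    by (simp add: nn_integral_cmult mgf_lin)
  also have "\<dots> = ennreal (exp (- a * \<sigma> * s + a\<^sup>2 * (\<Sum>i<N. (v i)\<^sup>2) / 2))"
    by (simp add: ennreal_mult[symmetric] mult_exp_exp)
  also have "\<dots> \<le> ennreal (exp (- s\<^sup>2 / 2))"
  proof -
    have "a\<^sup>2 * (\<Sum>i<N. (v i)\<^sup>2) \<le> a\<^sup>2 * \<sigma>\<^sup>2" using v by (intro mult_left_mono) auto
    moreover have "a * \<sigma> = s" using sig by (simp add: a_def)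
    moreover have "a\<^sup>2 * \<sigma>\<^sup>2 = s\<^sup>2" using \<open>a * \<sigma> = s\<close> by (metis power_mult_distrib)
    ultimately have "- a * \<sigma> * s + a\<^sup>2 * (\<Sum>i<N. (v i)\<^sup>2) / 2 \<le> - s\<^sup>2 / 2"
      by (simp add: power2_eq_square)
    then show ?thesis by simp
  qed
  finally show ?thesis .
qed

lemma vnorm_L2: "vnorm n x = L2_set x {..<n}"
  unfolding vnorm_def L2_set_def by simp

lemma vnorm_nonneg: "vnorm n x \<ge> 0"
  unfolding vnorm_def by (simp add: sum_nonneg)

lemma vnorm_triangle: "vnorm n (\<lambda>i. x i + y i) \<le> vnorm n x + vnorm n y"
  unfolding vnorm_L2 by (rule L2_set_triangle_ineq)

lemma vnorm_minus: "vnorm n (\<lambda>i. - x i) = vnorm n x"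
  unfolding vnorm_def by simp

lemma vnorm_diff_sym: "vnorm n (\<lambda>i. x i - y i) = vnorm n (\<lambda>i. y i - x i)"
  unfolding vnorm_def by (simp add: power2_commute)

lemma vnorm_tri_diff: "vnorm n (\<lambda>i. x i - z i) \<le> vnorm n (\<lambda>i. x i - y i) + vnorm n (\<lambda>i. y i - z i)"
  using vnorm_triangle[of n "\<lambda>i. x i - y i" "\<lambda>i. y i - z i"] by simp

lemma vnorm_scale: "vnorm n (\<lambda>i. c * x i) = \<bar>c\<bar> * vnorm n x"
  unfolding vnorm_def by (simp add: power_mult_distrib sum_distrib_left[symmetric] real_sqrt_mult)

lemma vnorm_zero[simp]: "vnorm n (\<lambda>i. 0) = 0"
  unfolding vnorm_def by simp

lemma lin_CS: "\<bar>lin N v w\<bar> \<le> vnorm N v * vnorm N w"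
proof -
  have "\<bar>lin N v w\<bar> \<le> (\<Sum>i<N. \<bar>v i\<bar> * \<bar>w i\<bar>)"
    unfolding lin_def by (rule order.trans[OF sum_abs]) (simp add: abs_mult mult.commute)
  also have "\<dots> \<le> vnorm N v * vnorm N w" unfolding vnorm_L2 by (rule L2_set_mult_ineq)
  finally show ?thesis .
qed

lemma lin_diff: "lin N (\<lambda>i. a i - b i) w = lin N a w - lin N b w"
  unfolding lin_def by (simp add: algebra_simps sum_subtractf)

lemma lin_add: "lin N (\<lambda>i. a i + b i) w = lin N a w + lin N b w"
  unfolding lin_def by (simp add: algebra_simps sum.distrib)

lemma lin_neg: "lin N (\<lambda>i. - a i) w = - lin N a w"
  unfolding lin_def by (simp add: sum_negf)

lemma lin_zero[simp]: "lin N (\<lambda>i. 0) w = 0"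
  unfolding lin_def by simp

lemma mv_mm: "mv m k A (mv k n B z) = mv m n (mm m k n A B) z"
proof
  fix i
  show "mv m k A (mv k n B z) i = mv m n (mm m k n A B) z i"
    unfolding mv_def mm_def
    by (simp add: sum_distrib_left sum_distrib_right mult_ac sum.swap[of _ "{..<k}" "{..<n}"])
qed

lemma mv_scale: "mv m n A (\<lambda>j. c * z j) = (\<lambda>i. c * mv m n A z i)"
  unfolding mv_def by (auto simp: sum_distrib_left mult_ac)

lemma mv_neg: "mv m n A (\<lambda>j. - z j) = (\<lambda>i. - mv m n A z i)"
  using mv_scale[of m n A "-1" z] by simp

lemma mv_zero: "mv m n A (\<lambda>j. 0) = (\<lambda>i. 0)"
  unfolding mv_def by auto

lemma mv_trunc: "mv m n A (\<lambda>j. if j < n then z j else 0) = mv m n A z"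
  unfolding mv_def by auto

lemma mv_Rn: "mv m n A z \<in> Rn m"
  unfolding mv_def Rn_def by auto

lemma mv_frob: "vnorm m (mv m n A z) \<le> sqrt (\<Sum>i<m. \<Sum>j<n. (A i j)\<^sup>2) * vnorm n z"
proof -
  have "(\<Sum>i<m. (mv m n A z i)\<^sup>2) \<le> (\<Sum>i<m. (\<Sum>j<n. (A i j)\<^sup>2) * (\<Sum>j<n. (z j)\<^sup>2))"
  proof (rule sum_mono)
    fix i assume "i \<in> {..<m}"
    then have "mv m n A z i = (\<Sum>j<n. A i j * z j)" by (simp add: mv_def)
    moreover have "\<bar>\<Sum>j<n. A i j * z j\<bar> \<le> L2_set (A i) {..<n} * L2_set z {..<n}"
      by (rule order.trans[OF sum_abs]) (simp add: abs_mult L2_set_mult_ineq)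
    then have "(\<Sum>j<n. A i j * z j)\<^sup>2 \<le> (L2_set (A i) {..<n} * L2_set z {..<n})\<^sup>2"
      by (metis abs_ge_zero abs_le_square_iff abs_of_nonneg L2_set_nonneg mult_nonneg_nonneg)
    ultimately show "(mv m n A z i)\<^sup>2 \<le> (\<Sum>j<n. (A i j)\<^sup>2) * (\<Sum>j<n. (z j)\<^sup>2)"
      by (simp add: power_mult_distrib L2_set_def sum_nonneg)
  qed
  also have "\<dots> = (\<Sum>i<m. \<Sum>j<n. (A i j)\<^sup>2) * (\<Sum>j<n. (z j)\<^sup>2)"
    by (simp add: sum_distrib_right)
  finally show ?thesis unfolding vnorm_def
    by (metis real_sqrt_le_mono real_sqrt_mult)
qed

lemma opnorm_bdd: "bdd_above ((\<lambda>z. vnorm m (mv m n A z)) ` unit_cball n)"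
proof -
  have "\<forall>y\<in>(\<lambda>z. vnorm m (mv m n A z)) ` unit_cball n. y \<le> sqrt (\<Sum>i<m. \<Sum>j<n. (A i j)\<^sup>2)"
  proof
    fix y assume "y \<in> (\<lambda>z. vnorm m (mv m n A z)) ` unit_cball n"
    then obtain z where z: "z \<in> unit_cball n" "y = vnorm m (mv m n A z)" by auto
    have "y \<le> sqrt (\<Sum>i<m. \<Sum>j<n. (A i j)\<^sup>2) * vnorm n z" using z mv_frob by simp
    also have "\<dots> \<le> sqrt (\<Sum>i<m. \<Sum>j<n. (A i j)\<^sup>2) * 1"
      using z by (intro mult_left_mono) (auto simp: unit_cball_def intro!: sum_nonneg)
    finally show "y \<le> sqrt (\<Sum>i<m. \<Sum>j<n. (A i j)\<^sup>2)" by simp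
  qed
  then show ?thesis unfolding bdd_above_def by blast
qed

lemma zero_cball: "(\<lambda>i. 0) \<in> unit_cball n"
  unfolding unit_cball_def Rn_def by simp

lemma opnorm_nonneg: "opnorm m n A \<ge> 0"
proof -
  have "vnorm m (mv m n A (\<lambda>i. 0)) \<le> opnorm m n A"
    unfolding opnorm_def using zero_cball opnorm_bdd by (intro cSup_upper) auto
  then show ?thesis by (simp add: mv_zero)
qed

lemma opnorm_bound: "vnorm m (mv m n A z) \<le> opnorm m n A * vnorm n z"
proof -
  define z' where "z' = (\<lambda>j. if j < n then z j else 0)"
  have mz: "mv m n A z' = mv m n A z" unfolding z'_def by (rule mv_trunc)
  have nz: "vnorm n z' = vnorm n z" unfolding z'_def vnorm_def by simp
  have z'R: "z' \<in> Rn n" unfolding z'_def Rn_def by simp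
  show ?thesis
  proof (cases "vnorm n z = 0")
    case True
    then have "\<forall>j<n. z j = 0" unfolding vnorm_def
      by (simp add: sum_nonneg_eq_0_iff)
    then have "z' = (\<lambda>j. 0)" unfolding z'_def by auto
    then have "mv m n A z = (\<lambda>i. 0)" using mz mv_zero by metis
    then show ?thesis using True by simp
  next
    case False
    define \<rho> where "\<rho> = vnorm n z"
    have \<rho>: "\<rho> > 0" using False vnorm_nonneg[of n z] by (simp add: \<rho>_def)
    define y where "y = (\<lambda>j. (1/\<rho>) * z' j)"
    have "vnorm n y = 1" unfolding y_def vnorm_scale using \<rho> by (simp add: nz \<rho>_def)
    then have "y \<in> unit_cball n"
      unfolding unit_cball_def using z'R by (auto simp: y_def Rn_def)
    then have "vnorm m (mv m n A y) \<le> opnorm m n A"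
      unfolding opnorm_def using opnorm_bdd by (intro cSup_upper) auto
    moreover have "mv m n A y = (\<lambda>i. (1/\<rho>) * mv m n A z i)"
      unfolding y_def mv_scale mz ..
    ultimately have "(1/\<rho>) * vnorm m (mv m n A z) \<le> opnorm m n A"
      using \<rho> by (simp only: vnorm_scale) simp
    then show ?thesis using \<rho> by (simp add: \<rho>_def field_simps)
  qed
qed

lemma Delta_bound: "vnorm N (mv N N (Delta N v) y) \<le> vnorm N y"
proof -
  have "(\<Sum>i<N. (mv N N (Delta N v) y i)\<^sup>2) \<le> (\<Sum>i<N. (y i)\<^sup>2)"
  proof (rule sum_mono)
    fix i assume i: "i \<in> {..<N}"
    have "mv N N (Delta N v) y i = (if v i > 0 then y i else 0)"
    proof (cases "v i > 0")
      case True
      have "mv N N (Delta N v) y i = (\<Sum>j<N. (if i = j then 1 else 0) * y j)"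
        using i True by (auto simp: mv_def Delta_def intro!: sum.cong)
      also have "\<dots> = (\<Sum>j<N. if i = j then y j else 0)"
        by (rule sum.cong) auto
      finally have "mv N N (Delta N v) y i = (\<Sum>j<N. if i = j then y j else 0)" .
      then show ?thesis using i True by simp
    next
      case False then show ?thesis using i by (simp add: mv_def Delta_def)
    qed
    then show "(mv N N (Delta N v) y i)\<^sup>2 \<le> (y i)\<^sup>2" by simp
  qed
  then show ?thesis unfolding vnorm_def by simp
qed

lemma netmat_bound:
  assumes "1 \<le> L"
  shows "vnorm N (mv N d (netmat d N W b x L) z) \<le> (\<Prod>l<L. opnorm N (indim d N l) (W l)) * vnorm d z"
  using assms
proof (induction L rule: nat_induct_at_least)
  case base
  have "mv N d (netmat d N W b x 1) z = mv N N (Dmat d N W b x 0) (mv N d (W 0) z)"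
    by (simp add: mv_mm)
  then have "vnorm N (mv N d (netmat d N W b x 1) z) \<le> vnorm N (mv N d (W 0) z)"
    using Delta_bound unfolding Dmat_def by metis
  also have "\<dots> \<le> opnorm N d (W 0) * vnorm d z" by (rule opnorm_bound)
  finally show ?case by (simp add: indim_def)
next
  case (Suc n)
  then obtain l where l: "n = Suc l" by (cases n) auto
  have "mv N d (netmat d N W b x (Suc n)) z = mv N N (Dmat d N W b x n) (mv N N (W n) (mv N d (netmat d N W b x n) z))"
    using l by (simp add: mv_mm)
  then have "vnorm N (mv N d (netmat d N W b x (Suc n)) z) \<le> vnorm N (mv N N (W n) (mv N d (netmat d N W b x n) z))"
    using Delta_bound unfolding Dmat_def by metis
  also have "\<dots> \<le> opnorm N N (W n) * vnorm N (mv N d (netmat d N W b x n) z)" by (rule opnorm_bound)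
  also have "\<dots> \<le> opnorm N N (W n) * ((\<Prod>l<n. opnorm N (indim d N l) (W l)) * vnorm d z)"
    using Suc.IH by (intro mult_left_mono opnorm_nonneg) auto
  also have "\<dots> = (\<Prod>l<Suc n. opnorm N (indim d N l) (W l)) * vnorm d z"
    using l by (simp add: indim_def mult_ac)
  finally show ?case .
qed

lemma abs_le_vnorm: "i < N \<Longrightarrow> \<bar>t i\<bar> \<le> vnorm N t"
proof -
  assume i: "i < N"
  have "(t i)\<^sup>2 \<le> (\<Sum>j<N. (t j)\<^sup>2)"
    using i by (intro member_le_sum) auto
  then have "sqrt ((t i)\<^sup>2) \<le> sqrt (\<Sum>j<N. (t j)\<^sup>2)" by (rule real_sqrt_le_mono)
  then show ?thesis unfolding vnorm_def by simp
qed

lemma grid_net: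
  assumes eps: "\<epsilon> > 0" and R0: "R \<ge> 0" and bnd: "\<forall>t\<in>T. vnorm N t \<le> R"
  shows "\<exists>F. finite F \<and> F \<subseteq> T \<and> real (card F) \<le> (2 * R * sqrt (real N + 1) / \<epsilon> + 3) ^ N \<and>
      T \<subseteq> (\<Union>c\<in>F. {y. vnorm N (\<lambda>i. y i - c i) \<le> \<epsilon>})"
proof -
  define h where "h = \<epsilon> / sqrt (real N + 1)"
  have h: "h > 0" using eps by (simp add: h_def)
  define K where "K = \<lceil>R / h\<rceil>"
  define cell where "cell = (\<lambda>t::nat\<Rightarrow>real. restrict (\<lambda>i. \<lfloor>t i / h\<rfloor>) {..<N})"
  have cellT: "cell ` T \<subseteq> PiE {..<N} (\<lambda>_. {-K..K})"
  proof
    fix c assume "c \<in> cell ` T"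
    then obtain t where t: "t \<in> T" "c = cell t" by auto
    have "\<lfloor>t i / h\<rfloor> \<in> {-K..K}" if i: "i < N" for i
    proof -
      have a: "\<bar>t i\<bar> \<le> R" using abs_le_vnorm[OF i, of t] bnd t by force
      have "t i / h \<le> R / h" using a h by (simp add: divide_right_mono)
      then have "\<lfloor>t i / h\<rfloor> \<le> \<lfloor>R / h\<rfloor>" by (rule floor_mono)
      then have u: "\<lfloor>t i / h\<rfloor> \<le> K" unfolding K_def
        using floor_le_ceiling[of "R/h"] by linarith
      have "-R \<le> t i" using a by simp
      then have "(-R) / h \<le> t i / h" using h by (intro divide_right_mono) auto
      then have "- (R / h) \<le> t i / h" by simp
      then have "\<lfloor>- (R / h)\<rfloor> \<le> \<lfloor>t i / h\<rfloor>" by (rule floor_mono)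
      moreover have "- K = \<lfloor>- (R / h)\<rfloor>" by (simp add: K_def ceiling_def)
      ultimately have "- K \<le> \<lfloor>t i / h\<rfloor>" by simp
      with u show ?thesis by simp
    qed
    then show "c \<in> PiE {..<N} (\<lambda>_. {-K..K})" using t by (auto simp: cell_def)
  qed
  have fin: "finite (PiE {..<N} (\<lambda>_. {-K..K}))" by (intro finite_PiE) auto
  have cardP: "card (PiE {..<N} (\<lambda>_::nat. {-K..K})) = (nat (2*K+1)) ^ N"
    by (simp add: card_PiE)
  define rep where "rep = (\<lambda>c. SOME t. t \<in> T \<and> cell t = c)"
  define F where "F = rep ` (cell ` T)"
  have repT: "rep (cell t) \<in> T \<and> cell (rep (cell t)) = cell t" if "t \<in> T" for t
    unfolding rep_def by (rule someI[of _ t]) (use that in auto)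
  have finF: "finite F" unfolding F_def using fin cellT by (meson finite_imageI finite_subset)
  have FT: "F \<subseteq> T" unfolding F_def using repT by auto
  have cardF: "card F \<le> (nat (2*K+1)) ^ N"
  proof -
    have "card F \<le> card (cell ` T)" unfolding F_def by (rule card_image_le) (meson fin cellT finite_subset)
    also have "\<dots> \<le> card (PiE {..<N} (\<lambda>_::nat. {-K..K}))" by (rule card_mono[OF fin cellT])
    finally show ?thesis using cardP by simp
  qed
  have K0: "K \<ge> 0" unfolding K_def using R0 h by (simp add: less_le_trans[of "-1" 0])
  have "real (card F) \<le> real (nat (2*K+1)) ^ N" using cardF
    by (metis of_nat_le_iff of_nat_power)
  also have "\<dots> \<le> (2 * R * sqrt (real N + 1) / \<epsilon> + 3) ^ N"
  proof (rule power_mono)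
    have "real_of_int K \<le> R / h + 1" unfolding K_def by linarith
    then have "real (nat (2*K+1)) \<le> 2 * (R / h) + 3" using K0 by simp
    also have "R / h = R * sqrt (real N + 1) / \<epsilon>" by (simp add: h_def)
    finally show "real (nat (2*K+1)) \<le> 2 * R * sqrt (real N + 1) / \<epsilon> + 3" by simp
  qed simp
  finally have c: "real (card F) \<le> (2 * R * sqrt (real N + 1) / \<epsilon> + 3) ^ N" .
  have cov: "T \<subseteq> (\<Union>c\<in>F. {y. vnorm N (\<lambda>i. y i - c i) \<le> \<epsilon>})"
  proof
    fix t assume t: "t \<in> T"
    define s where "s = rep (cell t)"
    have sF: "s \<in> F" unfolding s_def F_def using t by auto
    have sc: "cell s = cell t" unfolding s_def using repT[OF t] by simp
    have "(\<Sum>i<N. (t i - s i)\<^sup>2) \<le> (\<Sum>i<N. h\<^sup>2)"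
    proof (rule sum_mono)
      fix i assume i: "i \<in> {..<N}"
      have "\<lfloor>t i / h\<rfloor> = \<lfloor>s i / h\<rfloor>" using sc i unfolding cell_def by (metis restrict_apply')
      then have "\<bar>t i / h - s i / h\<bar> < 1" by linarith
      moreover have "t i - s i = (t i / h - s i / h) * h" using h by (simp add: field_simps)
      then have "\<bar>t i - s i\<bar> = \<bar>t i / h - s i / h\<bar> * h" using h by (simp add: abs_mult)
      ultimately have "\<bar>t i - s i\<bar> < h" using h by (metis mult_strict_right_mono mult_1)
      then show "(t i - s i)\<^sup>2 \<le> h\<^sup>2" using h by (metis abs_le_square_iff abs_of_pos less_imp_le)
    qed
    also have "\<dots> = real N * h\<^sup>2" by simp
    also have "\<dots> \<le> \<epsilon>\<^sup>2"
    proof -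
      have "real N * h\<^sup>2 = real N / (real N + 1) * \<epsilon>\<^sup>2" by (simp add: h_def power_divide)
      also have "\<dots> \<le> 1 * \<epsilon>\<^sup>2" by (intro mult_right_mono) auto
      finally show ?thesis by simp
    qed
    finally have "(\<Sum>i<N. (t i - s i)\<^sup>2) \<le> \<epsilon>\<^sup>2" .
    then have "sqrt (\<Sum>i<N. (t i - s i)\<^sup>2) \<le> sqrt (\<epsilon>\<^sup>2)" by (rule real_sqrt_le_mono)
    then have "vnorm N (\<lambda>i. t i - s i) \<le> \<epsilon>" unfolding vnorm_def using eps by simp
    then show "t \<in> (\<Union>c\<in>F. {y. vnorm N (\<lambda>i. y i - c i) \<le> \<epsilon>})" using sF by auto
  qed
  show ?thesis using finF FT c cov by blast
qed

abbreviation covers where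
  "covers N T F \<epsilon> \<equiv> T \<subseteq> (\<Union>c\<in>F. {y. vnorm N (\<lambda>i. y i - c i) \<le> \<epsilon>})"

lemma covnum_ex:
  assumes "\<epsilon> > 0" "R \<ge> 0" "\<forall>t\<in>T. vnorm N t \<le> R"
  shows "\<exists>F. finite F \<and> F \<subseteq> T \<and> card F = covnum N T \<epsilon> \<and> covers N T F \<epsilon>"
proof -
  obtain F where "finite F \<and> F \<subseteq> T \<and> covers N T F \<epsilon>" using grid_net[OF assms] by blast
  then have "\<exists>k F. finite F \<and> F \<subseteq> T \<and> card F = k \<and> covers N T F \<epsilon>" by blast
  then show ?thesis unfolding covnum_def by (rule LeastI_ex)
qed

lemma covnum_le_card:
  assumes "finite F" "F \<subseteq> T" "covers N T F \<epsilon>"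
  shows "covnum N T \<epsilon> \<le> card F"
  unfolding covnum_def using assms by (intro Least_le) blast

lemma covnum_anti:
  assumes "0 < \<epsilon>" "\<epsilon> \<le> \<epsilon>'" "R \<ge> 0" "\<forall>t\<in>T. vnorm N t \<le> R"
  shows "covnum N T \<epsilon>' \<le> covnum N T \<epsilon>"
proof -
  obtain F where F: "finite F" "F \<subseteq> T" "card F = covnum N T \<epsilon>" "covers N T F \<epsilon>"
    using covnum_ex[OF assms(1,3,4)] by blast
  have "covers N T F \<epsilon>'"
  proof
    fix y assume "y \<in> T"
    then obtain c where c: "c \<in> F" "vnorm N (\<lambda>i. y i - c i) \<le> \<epsilon>" using F(4) by blast
    then have "vnorm N (\<lambda>i. y i - c i) \<le> \<epsilon>'" using assms(2) by linarith
    then show "y \<in> (\<Union>c\<in>F. {y. vnorm N (\<lambda>i. y i - c i) \<le> \<epsilon>'})" using c(1) by blast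
  qed
  then show ?thesis using covnum_le_card[OF F(1,2)] F(3) by simp
qed

lemma covnum_pos:
  assumes "0 < \<epsilon>" "R \<ge> 0" "\<forall>t\<in>T. vnorm N t \<le> R" "T \<noteq> {}"
  shows "covnum N T \<epsilon> \<ge> 1"
proof -
  obtain F where F: "finite F" "F \<subseteq> T" "card F = covnum N T \<epsilon>" "covers N T F \<epsilon>"
    using covnum_ex[OF assms(1,2,3)] by blast
  then have "F \<noteq> {}" using assms(4) by auto
  then have "card F > 0" using F(1) by (simp add: card_gt_0_iff)
  then show ?thesis using F(3) by simp
qed

lemma covnum_bound:
  assumes "0 < \<epsilon>" "R \<ge> 0" "\<forall>t\<in>T. vnorm N t \<le> R"
  shows "real (covnum N T \<epsilon>) \<le> (2 * R * sqrt (real N + 1) / \<epsilon> + 3) ^ N"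
proof -
  obtain F where F: "finite F" "F \<subseteq> T" "real (card F) \<le> (2 * R * sqrt (real N + 1) / \<epsilon> + 3) ^ N" "covers N T F \<epsilon>"
    using grid_net[OF assms] by blast
  show ?thesis using covnum_le_card[OF F(1,2,4)] F(3) by (meson of_nat_le_iff order_trans)
qed

definition ent :: "nat \<Rightarrow> (nat \<Rightarrow> real) set \<Rightarrow> real \<Rightarrow> real" where
  "ent N T \<epsilon> = sqrt (ln (real (covnum N T \<epsilon>)))"

lemma ent_nonneg: "ent N T \<epsilon> \<ge> 0"
proof (cases "covnum N T \<epsilon> = 0")
  case True then show ?thesis by (simp add: ent_def)
next
  case False then show ?thesis by (simp add: ent_def)
qed

lemma ent_anti:
  assumes "0 < \<epsilon>" "\<epsilon> \<le> \<epsilon>'" "R \<ge> 0" "\<forall>t\<in>T. vnorm N t \<le> R" "T \<noteq> {}"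
  shows "ent N T \<epsilon>' \<le> ent N T \<epsilon>"
proof -
  have "1 \<le> covnum N T \<epsilon>'" using covnum_pos[of \<epsilon>' R T N] assms by simp
  moreover have "covnum N T \<epsilon>' \<le> covnum N T \<epsilon>" using covnum_anti assms by blast
  ultimately show ?thesis unfolding ent_def by simp
qed

lemma ent_bound:
  assumes "0 < \<epsilon>" "R \<ge> 0" "\<forall>t\<in>T. vnorm N t \<le> R" "T \<noteq> {}"
  shows "ent N T \<epsilon> \<le> sqrt (real N * 2 * R * sqrt (real N + 1)) * \<epsilon> powr (-1/2) + sqrt (3 * real N)"
proof -
  define Q where "Q = 2 * R * sqrt (real N + 1) / \<epsilon> + 3"
  have Q: "Q \<ge> 3" unfolding Q_def using assms by simp
  have c1: "real (covnum N T \<epsilon>) \<ge> 1" using covnum_pos[OF assms] by simp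
  have "ln (real (covnum N T \<epsilon>)) \<le> ln (Q ^ N)"
    using covnum_bound[OF assms(1-3)] c1 Q_def by simp
  also have "\<dots> = real N * ln Q" using Q by (simp add: ln_realpow)
  also have "\<dots> \<le> real N * Q" using ln_le_minus_one[of Q] Q by (intro mult_left_mono) auto
  also have "\<dots> = (real N * 2 * R * sqrt (real N + 1)) * (1/\<epsilon>) + 3 * real N"
    unfolding Q_def by (simp add: algebra_simps)
  finally have "ent N T \<epsilon> \<le> sqrt ((real N * 2 * R * sqrt (real N + 1)) * (1/\<epsilon>) + 3 * real N)"
    unfolding ent_def by simp
  also have "\<dots> \<le> sqrt ((real N * 2 * R * sqrt (real N + 1)) * (1/\<epsilon>)) + sqrt (3 * real N)"
    using assms by (intro sqrt_add_le_add_sqrt) auto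
  also have "sqrt ((real N * 2 * R * sqrt (real N + 1)) * (1/\<epsilon>)) = sqrt (real N * 2 * R * sqrt (real N + 1)) * \<epsilon> powr (-1/2)"
  proof -
    have "\<epsilon> powr (-1/2) = \<epsilon> powr (- (1/2))" by simp
    also have "\<dots> = inverse (\<epsilon> powr (1/2))" by (rule powr_minus)
    also have "\<epsilon> powr (1/2) = sqrt \<epsilon>" using assms by (simp add: powr_half_sqrt)
    also have "inverse (sqrt \<epsilon>) = sqrt (1/\<epsilon>)" by (metis real_sqrt_inverse inverse_eq_divide)
    finally have "\<epsilon> powr (-1/2) = sqrt (1/\<epsilon>)" .
    then show ?thesis by (simp only: real_sqrt_mult)
  qed
  finally show ?thesis .
qed

lemma ent_integrable:
  assumes "\<Lambda> \<ge> 0" "R \<ge> 0" "\<forall>t\<in>T. vnorm N t \<le> R" "T \<noteq> {}"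
  shows "ent N T integrable_on {0..\<Lambda>}"
proof -
  define A where "A = sqrt (real N * 2 * R * sqrt (real N + 1))"
  define B where "B = sqrt (3 * real N)"
  define g where "g = (\<lambda>x::real. A * x powr (-1/2) + B)"
  have "(\<lambda>x::real. x powr (-1/2)) integrable_on {0..\<Lambda>}"
    by (rule integrable_on_powr_from_0) (use assms in auto)
  then have "(\<lambda>x::real. A * x powr (-1/2)) integrable_on {0..\<Lambda>}"
    using integrable_on_cmult_left[of "\<lambda>x::real. x powr (-1/2)" "{0..\<Lambda>}" A] by simp
  then have gi: "g integrable_on {0..\<Lambda>}"
    unfolding g_def by (intro integrable_add) auto
  have gi': "g integrable_on {0<..\<Lambda>}"
    by (rule integrable_spike_set[OF gi]) (auto intro: negligible_subset[of "{0}"])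
  have mono: "mono_on {0<..\<Lambda>} (\<lambda>x. - ent N T x)"
    unfolding mono_on_def using ent_anti[OF _ _ assms(2-4)] by auto
  have "space lborel = space lebesgue" "sets borel \<subseteq> sets lebesgue"
    by force+
  then have "(\<lambda>x. - ent N T x) \<in> borel_measurable (lebesgue_on {0<..\<Lambda>})"
    by (metis mono borel_measurable_mono_on_fnc borel_measurable_subalgebra mono_restrict_space space_lborel space_restrict_space)
  then have meas: "ent N T \<in> borel_measurable (lebesgue_on {0<..\<Lambda>})"
    using borel_measurable_uminus by fastforce
  have "ent N T integrable_on {0<..\<Lambda>}"
  proof (rule measurable_bounded_by_integrable_imp_integrable[OF meas gi'])
    fix x assume "x \<in> {0<..\<Lambda>}"
    then show "norm (ent N T x) \<le> g x"
      using ent_bound[OF _ assms(2-4), of x] ent_nonneg[of N T x] by (simp add: g_def A_def B_def)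
  qed auto
  then show ?thesis
    by (rule integrable_spike_set) (auto intro: negligible_subset[of "{0}"])
qed

lemma dyadic_sum:
  fixes f :: "real \<Rightarrow> real"
  assumes fi: "f integrable_on {0..\<Lambda>}" and f0: "\<And>x. 0 \<le> f x"
    and anti: "\<And>x y. 0 < x \<Longrightarrow> x \<le> y \<Longrightarrow> y \<le> \<Lambda> \<Longrightarrow> f y \<le> f x"
    and r: "0 < r" "r \<le> 2 * \<Lambda>"
  shows "(\<Sum>k\<in>{1..K}. (r / 2^(k+1)) * f (r / 2^k)) \<le> integral {r / 2^(K+1) .. r / 2} f"
proof (induction K)
  case 0
  show ?case using integral_null[of "r/2" "r/2" f] by simp
next
  case (Suc K)
  define a where "a = r / 2^(K+2)"
  define b where "b = r / 2^(K+1)"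
  have ab: "0 < a" "a \<le> b" "b \<le> r/2" "r/2 \<le> \<Lambda>" using r
    by (auto simp: a_def b_def divide_le_eq field_simps)
  have fi': "f integrable_on {a .. r/2}"
    by (rule integrable_on_subinterval[OF fi]) (use ab in auto)
  have "(b - a) * f b \<le> integral {a..b} f"
  proof -
    have "integral {a..b} (\<lambda>x. f b) \<le> integral {a..b} f"
      by (intro integral_le integrable_on_subinterval[OF fi]) (use ab in \<open>auto intro!: anti\<close>)
    then show ?thesis using ab by simp
  qed
  moreover have "b - a = r / 2^(Suc K + 1)" unfolding a_def b_def by (simp add: field_simps)
  ultimately have step: "r / 2^(Suc K + 1) * f (r / 2^(Suc K)) \<le> integral {a..b} f"
    by (simp add: b_def)
  have "(\<Sum>k\<in>{1..Suc K}. (r / 2^(k+1)) * f (r / 2^k)) = (\<Sum>k\<in>{1..K}. (r / 2^(k+1)) * f (r / 2^k)) + r / 2^(Suc K + 1) * f (r / 2^(Suc K))"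
    by simp
  also have "\<dots> \<le> integral {b .. r/2} f + integral {a..b} f"
    using Suc.IH step by (simp add: b_def)
  also have "\<dots> = integral {a .. r/2} f"
    using Henstock_Kurzweil_Integration.integral_combine[OF ab(2) ab(3) fi'] by simp
  finally show ?case by (simp add: a_def)
qed

locale chain =
  fixes N :: nat and T :: "(nat \<Rightarrow> real) set" and r :: real and \<Lambda> :: real
  assumes T0: "(\<lambda>i. 0) \<in> T"
    and Tsym: "\<And>t. t \<in> T \<Longrightarrow> (\<lambda>i. - t i) \<in> T"
    and rpos: "r > 0"
    and rb: "\<And>t. t \<in> T \<Longrightarrow> vnorm N t \<le> r"
    and rsup: "\<exists>t\<in>T. vnorm N t > r / 2"
    and rL: "r \<le> \<Lambda>"
begin

definition eps :: "nat \<Rightarrow> real" where "eps k = r / 2^k"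

definition nets :: "nat \<Rightarrow> (nat \<Rightarrow> real) set" where
  "nets k = (if k = 0 then {\<lambda>i. 0} else
     (SOME F. finite F \<and> F \<subseteq> T \<and> card F = covnum N T (eps k) \<and> covers N T F (eps k)))"

definition proj :: "nat \<Rightarrow> (nat \<Rightarrow> real) \<Rightarrow> (nat \<Rightarrow> real)" where
  "proj k t = (if k = 0 then (\<lambda>i. 0) else
     (SOME c. c \<in> nets k \<and> vnorm N (\<lambda>i. t i - c i) \<le> eps k))"

definition J where "J = integral {0..\<Lambda>} (ent N T)"

lemma r0: "r \<ge> 0" using rpos by simp
lemma rb': "\<forall>t\<in>T. vnorm N t \<le> r" using rb by blast
lemma Tne: "T \<noteq> {}" using T0 by blast

lemma eps_pos: "eps k > 0" unfolding eps_def using rpos by simp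

lemma eps_Suc: "eps (Suc k) = eps k / 2" unfolding eps_def by simp

lemma nets_props:
  assumes "k > 0"
  shows "finite (nets k) \<and> nets k \<subseteq> T \<and> card (nets k) = covnum N T (eps k) \<and> covers N T (nets k) (eps k)"
proof -
  have "\<exists>F. finite F \<and> F \<subseteq> T \<and> card F = covnum N T (eps k) \<and> covers N T F (eps k)"
    using covnum_ex[OF eps_pos r0 rb'] by blast
  then have "(\<lambda>F. finite F \<and> F \<subseteq> T \<and> card F = covnum N T (eps k) \<and> covers N T F (eps k))
     (SOME F. finite F \<and> F \<subseteq> T \<and> card F = covnum N T (eps k) \<and> covers N T F (eps k))" by (rule someI_ex)
  then show ?thesis unfolding nets_def using assms by simp
qed

lemma nets_finite: "finite (nets k)"
  using nets_props[of k] by (cases "k = 0") (auto simp: nets_def)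

lemma nets_sub: "nets k \<subseteq> T"
  using nets_props[of k] T0 by (cases "k = 0") (auto simp: nets_def)

lemma proj_props:
  assumes t: "t \<in> T"
  shows "proj k t \<in> nets k \<and> vnorm N (\<lambda>i. t i - proj k t i) \<le> eps k"
proof (cases "k = 0")
  case True
  then show ?thesis using rb[OF t] by (simp add: proj_def nets_def eps_def)
next
  case False
  then have "covers N T (nets k) (eps k)" using nets_props by simp
  then have "\<exists>c. c \<in> nets k \<and> vnorm N (\<lambda>i. t i - c i) \<le> eps k" using t by blast
  then have "(\<lambda>c. c \<in> nets k \<and> vnorm N (\<lambda>i. t i - c i) \<le> eps k) (SOME c. c \<in> nets k \<and> vnorm N (\<lambda>i. t i - c i) \<le> eps k)"
    by (rule someI_ex)
  then show ?thesis unfolding proj_def using False by simp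
qed

lemma card_nets_pos: "card (nets k) \<ge> 1"
proof (cases "k = 0")
  case True then show ?thesis by (simp add: nets_def)
next
  case False
  then show ?thesis using nets_props[of k] covnum_pos[OF eps_pos r0 rb' Tne, of k] by simp
qed

lemma card_nets_mono: "card (nets k) \<le> card (nets (Suc k))"
proof (cases "k = 0")
  case True then show ?thesis using card_nets_pos[of "Suc k"] by (simp add: nets_def)
next
  case False
  have "covnum N T (eps k) \<le> covnum N T (eps (Suc k))"
    by (rule covnum_anti[OF eps_pos _ r0 rb']) (simp add: eps_Suc eps_pos less_imp_le)
  then show ?thesis using nets_props[of k] nets_props[of "Suc k"] False by simp
qed

definition pairs :: "nat \<Rightarrow> ((nat \<Rightarrow> real) \<times> (nat \<Rightarrow> real)) set" where
  "pairs k = {(a, b). a \<in> nets (Suc k) \<and> b \<in> nets k \<and> vnorm N (\<lambda>i. a i - b i) \<le> 3 * eps (Suc k)}"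

lemma pairs_finite: "finite (pairs k)"
  by (rule finite_subset[of _ "nets (Suc k) \<times> nets k"]) (auto simp: pairs_def nets_finite)

lemma card_pairs: "real (card (pairs k)) \<le> (real (card (nets (Suc k))))\<^sup>2"
proof -
  have "card (pairs k) \<le> card (nets (Suc k) \<times> nets k)"
    by (rule card_mono) (auto simp: pairs_def nets_finite)
  also have "\<dots> = card (nets (Suc k)) * card (nets k)" by (simp add: card_cartesian_product)
  also have "\<dots> \<le> card (nets (Suc k)) * card (nets (Suc k))" by (intro mult_left_mono card_nets_mono) simp
  finally show ?thesis by (simp add: power2_eq_square) (metis of_nat_le_iff of_nat_mult)
qed

definition thr :: "nat \<Rightarrow> real \<Rightarrow> real" where
  "thr k u = 3 * eps (Suc k) * sqrt (2 * (2 * ln (real (card (nets (Suc k)))) + u\<^sup>2 + real (Suc k)))"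

definition Bad :: "real \<Rightarrow> (nat \<Rightarrow> real) set" where
  "Bad u = (\<Union>k. \<Union>p\<in>pairs k. {w \<in> space (gauss_vec N). thr k u < lin N (\<lambda>i. fst p i - snd p i) w})"

lemma proj_step:
  assumes t: "t \<in> T"
  shows "(proj (Suc k) t, proj k t) \<in> pairs k"
proof -
  have "vnorm N (\<lambda>i. proj (Suc k) t i - proj k t i) \<le> vnorm N (\<lambda>i. proj (Suc k) t i - t i) + vnorm N (\<lambda>i. t i - proj k t i)"
    by (rule vnorm_tri_diff)
  also have "\<dots> \<le> eps (Suc k) + eps k"
    using proj_props[OF t, of k] proj_props[OF t, of "Suc k"] vnorm_diff_sym[of N "proj (Suc k) t" t] by simp
  also have "\<dots> = 3 * eps (Suc k)" by (simp add: eps_Suc)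
  finally show ?thesis unfolding pairs_def using proj_props[OF t] by simp
qed

lemma good_chain:
  assumes w: "w \<in> space (gauss_vec N)" "w \<notin> Bad u" and t: "t \<in> T"
  shows "lin N (proj K t) w \<le> (\<Sum>k<K. thr k u)"
proof (induction K)
  case 0 then show ?case by (simp add: proj_def)
next
  case (Suc K)
  have "lin N (\<lambda>i. proj (Suc K) t i - proj K t i) w \<le> thr K u"
    using w proj_step[OF t, of K] unfolding Bad_def by force
  then have "lin N (proj (Suc K) t) w - lin N (proj K t) w \<le> thr K u" by (simp add: lin_diff)
  then show ?case using Suc.IH by simp
qed

lemma good_bound:
  assumes w: "w \<in> space (gauss_vec N)" "w \<notin> Bad u" and t: "t \<in> T"
  shows "lin N t w \<le> (\<Sum>k<K. thr k u) + eps K * vnorm N w"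
proof -
  have "lin N t w = lin N (proj K t) w + lin N (\<lambda>i. t i - proj K t i) w" by (simp add: lin_diff)
  also have "lin N (\<lambda>i. t i - proj K t i) w \<le> vnorm N (\<lambda>i. t i - proj K t i) * vnorm N w"
    using lin_CS by (meson abs_le_D1)
  also have "\<dots> \<le> eps K * vnorm N w" using proj_props[OF t, of K] by (intro mult_right_mono vnorm_nonneg) auto
  finally show ?thesis using good_chain[OF w t, of K] by simp
qed

end

lemma geo1: "(\<Sum>k<K. 1 / (2::real)^(k+1)) = 1 - 1 / 2^K"
  by (induction K) (auto simp: field_simps)

lemma geo2: "(\<Sum>k<K. real (k+1) / (2::real)^(k+1)) = 2 - real (K+2) / 2^K"
  by (induction K) (auto simp: field_simps)

lemma sum_shift1: "(\<Sum>k<K. g (Suc k)) = (\<Sum>j\<in>{1..K}. g j)"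
  by (induction K) (auto simp: atLeastAtMostSuc_conv add.commute)

lemma exp_neg_half: "exp (- real m) \<le> (1/2::real) ^ m"
proof -
  have e: "exp (-1::real) \<le> 1/2"
  proof -
    have "2 \<le> exp (1::real)" using exp_ge_add_one_self[of 1] by simp
    then show ?thesis by (simp add: exp_minus field_simps)
  qed
  have "exp (- real m) = exp (-1) ^ m" by (simp add: exp_of_nat_mult[symmetric])
  also have "\<dots> \<le> (1/2) ^ m" by (intro power_mono e) simp
  finally show ?thesis .
qed

context chain begin

lemma Bad_sets: "Bad u \<in> sets (gauss_vec N)"
  unfolding Bad_def
  by (rule sets.countable_UN) (auto intro!: sets.finite_UN pairs_finite)

lemma level_bound:
  assumes u: "u \<ge> 0"
  shows "emeasure (gauss_vec N) (\<Union>p\<in>pairs k. {w \<in> space (gauss_vec N). thr k u < lin N (\<lambda>i. fst p i - snd p i) w})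
     \<le> ennreal (exp (- u\<^sup>2) * (1/2)^(Suc k))"
proof -
  define n where "n = real (card (nets (Suc k)))"
  have n1: "n \<ge> 1" unfolding n_def using card_nets_pos[of "Suc k"] by simp
  define \<sigma> where "\<sigma> = 3 * eps (Suc k)"
  have \<sigma>: "\<sigma> > 0" unfolding \<sigma>_def using eps_pos by simp
  define s where "s = sqrt (2 * (2 * ln n + u\<^sup>2 + real (Suc k)))"
  have s0: "s \<ge> 0" unfolding s_def using n1 by simp
  have thr: "thr k u = \<sigma> * s" unfolding thr_def \<sigma>_def s_def n_def by simp
  have es: "exp (- s\<^sup>2 / 2) = exp (- u\<^sup>2) * exp (- real (Suc k)) / n\<^sup>2"
  proof -
    have "s\<^sup>2 = 2 * (2 * ln n + u\<^sup>2 + real (Suc k))" unfolding s_def using n1 by simp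
    then have "- s\<^sup>2 / 2 = - u\<^sup>2 + - real (Suc k) + - (2 * ln n)" by simp
    then have "exp (- s\<^sup>2 / 2) = exp (- u\<^sup>2) * exp (- real (Suc k)) * exp (- (2 * ln n))"
      by (simp only: exp_add)
    then have "exp (- s\<^sup>2 / 2) = exp (- u\<^sup>2) * exp (- real (Suc k)) / exp (2 * ln n)"
      by (simp only: exp_minus divide_inverse)
    moreover have "exp (2 * ln n) = n\<^sup>2"
    proof -
      have "exp (2 * ln n) = exp (ln n) * exp (ln n)" by (simp only: mult_2 exp_add)
      then show ?thesis using n1 by (simp add: power2_eq_square)
    qed
    ultimately show ?thesis by simp
  qed
  have each: "emeasure (gauss_vec N) {w \<in> space (gauss_vec N). thr k u < lin N (\<lambda>i. fst p i - snd p i) w}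
      \<le> ennreal (exp (- u\<^sup>2) * exp (- real (Suc k)) / n\<^sup>2)" if p: "p \<in> pairs k" for p
  proof -
    have "vnorm N (\<lambda>i. fst p i - snd p i) \<le> \<sigma>" using p unfolding pairs_def \<sigma>_def by auto
    then have "sqrt (\<Sum>i<N. (fst p i - snd p i)\<^sup>2) \<le> sqrt (\<sigma>\<^sup>2)" using \<sigma> unfolding vnorm_def by simp
    then have v: "(\<Sum>i<N. (fst p i - snd p i)\<^sup>2) \<le> \<sigma>\<^sup>2" by (simp only: real_sqrt_le_iff)
    show ?thesis using tail_lin[OF \<sigma> v s0] thr es by simp
  qed
  have "emeasure (gauss_vec N) (\<Union>p\<in>pairs k. {w \<in> space (gauss_vec N). thr k u < lin N (\<lambda>i. fst p i - snd p i) w})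
      \<le> (\<Sum>p\<in>pairs k. emeasure (gauss_vec N) {w \<in> space (gauss_vec N). thr k u < lin N (\<lambda>i. fst p i - snd p i) w})"
    by (intro emeasure_subadditive_finite pairs_finite) auto
  also have "\<dots> \<le> (\<Sum>p\<in>pairs k. ennreal (exp (- u\<^sup>2) * exp (- real (Suc k)) / n\<^sup>2))"
    by (intro sum_mono each)
  also have "\<dots> = ennreal (real (card (pairs k)) * (exp (- u\<^sup>2) * exp (- real (Suc k)) / n\<^sup>2))"
    by (simp add: ennreal_of_nat_eq_real_of_nat ennreal_mult[symmetric] times_divide_eq_right)
  also have "\<dots> \<le> ennreal (n\<^sup>2 * (exp (- u\<^sup>2) * exp (- real (Suc k)) / n\<^sup>2))"
    using card_pairs[of k] by (intro ennreal_leI mult_right_mono) (auto simp: n_def)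
  also have "\<dots> = ennreal (exp (- u\<^sup>2) * exp (- real (Suc k)))" using n1 by simp
  also have "\<dots> \<le> ennreal (exp (- u\<^sup>2) * (1/2)^(Suc k))"
    by (intro ennreal_leI mult_left_mono) (use exp_neg_half[of "Suc k"] in auto)
  finally show ?thesis .
qed

lemma Bad_prob:
  assumes u: "u \<ge> 0"
  shows "emeasure (gauss_vec N) (Bad u) \<le> ennreal (exp (- u\<^sup>2))"
proof -
  have "emeasure (gauss_vec N) (Bad u) \<le> (\<Sum>k. emeasure (gauss_vec N) (\<Union>p\<in>pairs k. {w \<in> space (gauss_vec N). thr k u < lin N (\<lambda>i. fst p i - snd p i) w}))"
    unfolding Bad_def
    by (intro emeasure_subadditive_countably) (auto intro!: sets.finite_UN pairs_finite)
  also have "\<dots> \<le> (\<Sum>k. ennreal (exp (- u\<^sup>2) * (1/2)^(Suc k)))"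
    by (intro suminf_le level_bound u) auto
  also have "\<dots> = ennreal (\<Sum>k. exp (- u\<^sup>2) * (1/2)^(Suc k))"
    by (intro suminf_ennreal2) (auto intro!: summable_mult)
  also have "(\<Sum>k. exp (- u\<^sup>2) * (1/2::real)^(Suc k)) = exp (- u\<^sup>2)"
  proof -
    have "(\<Sum>k. exp (- u\<^sup>2) * (1/2::real)^(Suc k)) = exp (- u\<^sup>2) * (1/2) * (\<Sum>k. (1/2::real)^k)"
      by (subst suminf_mult[symmetric]) (auto simp: mult_ac)
    also have "(\<Sum>k. (1/2::real)^k) = 2" using suminf_geometric[of "1/2::real"] by simp
    finally show ?thesis by simp
  qed
  finally show ?thesis .
qed

lemma card_nets1: "card (nets 1) \<ge> 2"
proof (rule ccontr)
  assume "\<not> 2 \<le> card (nets 1)"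
  with card_nets_pos[of 1] have "card (nets 1) = 1" by simp
  then obtain c where c: "nets 1 = {c}" by (auto simp: card_Suc_eq)
  obtain t where t: "t \<in> T" "vnorm N t > r / 2" using rsup by blast
  have t': "(\<lambda>i. - t i) \<in> T" using Tsym[OF t(1)] .
  have cov: "covers N T (nets 1) (eps 1)" using nets_props[of 1] by simp
  have d1: "vnorm N (\<lambda>i. t i - c i) \<le> r/2" using cov t(1) c by (auto simp: eps_def)
  have d2: "vnorm N (\<lambda>i. - t i - c i) \<le> r/2" using cov t' c by (auto simp: eps_def)
  have "vnorm N (\<lambda>i. t i - (- t i)) \<le> vnorm N (\<lambda>i. t i - c i) + vnorm N (\<lambda>i. c i - (- t i))"
    by (rule vnorm_tri_diff)
  also have "vnorm N (\<lambda>i. c i - (- t i)) = vnorm N (\<lambda>i. - t i - c i)"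
    by (rule vnorm_diff_sym)
  finally have "vnorm N (\<lambda>i. t i - (- t i)) \<le> r" using d1 d2 by simp
  moreover have "vnorm N (\<lambda>i. t i - (- t i)) = 2 * vnorm N t"
    using vnorm_scale[of N 2 t] by simp
  ultimately show False using t(2) by simp
qed

lemma ent_nets: "k > 0 \<Longrightarrow> ent N T (eps k) = sqrt (ln (real (card (nets k))))"
  using nets_props[of k] by (simp add: ent_def)

lemma J_facts: "ent N T integrable_on {0..\<Lambda>}"
  using ent_integrable[OF _ r0 rb' Tne] rL rpos by simp

lemma dyadic_J: "(\<Sum>k\<in>{1..K}. (r / 2^(k+1)) * ent N T (r / 2^k)) \<le> J"
proof -
  have "(\<Sum>k\<in>{1..K}. (r / 2^(k+1)) * ent N T (r / 2^k)) \<le> integral {r / 2^(K+1) .. r / 2} (ent N T)"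
  proof (rule dyadic_sum[OF J_facts ent_nonneg _ rpos])
    fix x y :: real assume "0 < x" "x \<le> y" "y \<le> \<Lambda>"
    then show "ent N T y \<le> ent N T x" using ent_anti[OF _ _ r0 rb' Tne] by blast
  qed (use rL rpos in auto)
  also have "\<dots> \<le> J" unfolding J_def
  proof (rule integral_subset_le)
    show "{r / 2 ^ (K + 1)..r / 2} \<subseteq> {0..\<Lambda>}" using rpos rL by (auto simp: field_simps)
    then show "ent N T integrable_on {r / 2 ^ (K + 1)..r / 2}"
      using J_facts by (rule_tac integrable_on_subinterval) auto
  qed (use J_facts ent_nonneg in auto)
  finally show ?thesis .
qed

lemma r_le_J: "r \<le> 5 * J"
proof -
  have "(\<Sum>k\<in>{1..1}. (r / 2^(k+1)) * ent N T (r / 2^k)) \<le> J" by (rule dyadic_J)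
  then have a: "(r/4) * ent N T (eps 1) \<le> J" by (simp add: eps_def)
  have "ln 2 \<le> ln (real (card (nets 1)))" using card_nets1 by simp
  then have "2/3 \<le> ln (real (card (nets 1)))" using ln2_ge_two_thirds by linarith
  then have "sqrt (0.64) \<le> ent N T (eps 1)" using ent_nets[of 1]
    by (simp add: real_sqrt_le_mono)
  moreover have "sqrt (0.64::real) = 0.8" using real_sqrt_unique[of "0.8::real" "0.64"] by (simp add: power2_eq_square)
  ultimately have "0.8 \<le> ent N T (eps 1)" by simp
  then have "(r/4) * 0.8 \<le> (r/4) * ent N T (eps 1)" using rpos by (intro mult_left_mono) auto
  then show ?thesis using a by simp
qed

end

context chain begin

lemma thr_le:
  assumes u: "u \<ge> 0"
  shows "thr k u \<le> 12 * ((r / 2^(Suc k + 1)) * ent N T (r / 2^(Suc k))) + 3 * sqrt 2 * u * r * (1 / 2^(k+1))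
           + 6 * r * (real (k+1) / 2^(k+1))"
proof -
  define n where "n = real (card (nets (Suc k)))"
  have n1: "n \<ge> 1" unfolding n_def using card_nets_pos[of "Suc k"] by simp
  have ln0: "ln n \<ge> 0" using n1 by simp
  have "sqrt (2 * (2 * ln n + u\<^sup>2 + real (Suc k))) = sqrt (4 * ln n + 2 * u\<^sup>2 + 2 * real (Suc k))"
    by (simp add: algebra_simps)
  also have "\<dots> \<le> sqrt (4 * ln n + 2 * u\<^sup>2) + sqrt (2 * real (Suc k))"
    using ln0 by (intro sqrt_add_le_add_sqrt) auto
  also have "sqrt (4 * ln n + 2 * u\<^sup>2) \<le> sqrt (4 * ln n) + sqrt (2 * u\<^sup>2)"
    using ln0 by (intro sqrt_add_le_add_sqrt) auto
  also have "sqrt (4 * ln n) = 2 * sqrt (ln n)" by (simp add: real_sqrt_mult)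
  also have "sqrt (2 * u\<^sup>2) = sqrt 2 * u" using u by (simp add: real_sqrt_mult)
  also have "sqrt (2 * real (Suc k)) \<le> 2 * real (Suc k)"
  proof -
    have "2 * real (Suc k) \<le> (2 * real (Suc k))\<^sup>2" by (simp add: power2_eq_square)
    then have "sqrt (2 * real (Suc k)) \<le> sqrt ((2 * real (Suc k))\<^sup>2)" by (rule real_sqrt_le_mono)
    then show ?thesis by simp
  qed
  finally have A: "sqrt (2 * (2 * ln n + u\<^sup>2 + real (Suc k))) \<le> 2 * sqrt (ln n) + sqrt 2 * u + 2 * real (Suc k)"
    by simp
  have e: "ent N T (r / 2^(Suc k)) = sqrt (ln n)" using ent_nets[of "Suc k"] by (simp add: n_def eps_def)
  have "thr k u = 3 * (r / 2^(Suc k)) * sqrt (2 * (2 * ln n + u\<^sup>2 + real (Suc k)))"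
    unfolding thr_def n_def eps_def by simp
  also have "\<dots> \<le> 3 * (r / 2^(Suc k)) * (2 * sqrt (ln n) + sqrt 2 * u + 2 * real (Suc k))"
    using rpos by (intro mult_left_mono A) auto
  also have "\<dots> = 12 * ((r / 2^(Suc k + 1)) * ent N T (r / 2^(Suc k))) + 3 * sqrt 2 * u * r * (1 / 2^(k+1))
           + 6 * r * (real (k+1) / 2^(k+1))"
    using e by (simp add: field_simps)
  finally show ?thesis .
qed

lemma thr_sum:
  assumes u: "u \<ge> 0"
  shows "(\<Sum>k<K. thr k u) \<le> 12 * J + 12 * r + 5 * u * r"
proof -
  have "(\<Sum>k<K. thr k u) \<le> (\<Sum>k<K. 12 * ((r / 2^(Suc k + 1)) * ent N T (r / 2^(Suc k))) + 3 * sqrt 2 * u * r * (1 / 2^(k+1))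
           + 6 * r * (real (k+1) / 2^(k+1)))"
    by (intro sum_mono thr_le u)
  also have "\<dots> = 12 * (\<Sum>k<K. (r / 2^(Suc k + 1)) * ent N T (r / 2^(Suc k))) + 3 * sqrt 2 * u * r * (\<Sum>k<K. 1 / (2::real)^(k+1))
           + 6 * r * (\<Sum>k<K. real (k+1) / (2::real)^(k+1))"
    by (simp add: sum.distrib sum_distrib_left)
  finally have E: "(\<Sum>k<K. thr k u) \<le> 12 * (\<Sum>k<K. (r / 2^(Suc k + 1)) * ent N T (r / 2^(Suc k))) + 3 * sqrt 2 * u * r * (\<Sum>k<K. 1 / (2::real)^(k+1))
           + 6 * r * (\<Sum>k<K. real (k+1) / (2::real)^(k+1))" .
  have S1: "(\<Sum>k<K. (r / 2^(Suc k + 1)) * ent N T (r / 2^(Suc k))) \<le> J"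
    using sum_shift1[of "\<lambda>j. (r / 2^(j + 1)) * ent N T (r / 2^j)" K] dyadic_J[of K] by simp
  have S2: "(\<Sum>k<K. 1 / (2::real)^(k+1)) \<le> 1" by (subst geo1) simp
  have S3: "(\<Sum>k<K. real (k+1) / (2::real)^(k+1)) \<le> 2" by (subst geo2) simp
  have c2: "0 \<le> 3 * sqrt 2 * u * r" using u rpos by simp
  have "3 * sqrt 2 * u * r * (\<Sum>k<K. 1 / (2::real)^(k+1)) \<le> 3 * sqrt 2 * u * r * 1"
    using S2 c2 by (rule mult_left_mono)
  moreover have "6 * r * (\<Sum>k<K. real (k+1) / (2::real)^(k+1)) \<le> 6 * r * 2"
    using S3 rpos by (intro mult_left_mono) auto
  ultimately have "(\<Sum>k<K. thr k u) \<le> 12 * J + 3 * sqrt 2 * u * r + 6 * r * 2"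
    using E S1 by linarith
  also have "3 * sqrt 2 * u * r \<le> 5 * u * r"
  proof -
    have "sqrt 2 \<le> sqrt ((5/3)\<^sup>2)" by (intro real_sqrt_le_mono) (simp add: power2_eq_square)
    then have "sqrt 2 \<le> 5/3" by simp
    then show ?thesis using u rpos by (intro mult_right_mono) auto
  qed
  finally show ?thesis by simp
qed

lemma good_abs:
  assumes w: "w \<in> space (gauss_vec N)" "w \<notin> Bad u" and t: "t \<in> T" and u: "u \<ge> 0"
  shows "\<bar>lin N t w\<bar> \<le> 12 * J + 12 * r + 5 * u * r"
proof -
  have main: "lin N s w \<le> 12 * J + 12 * r + 5 * u * r" if s: "s \<in> T" for s
  proof (rule ccontr)
    define B where "B = 12 * J + 12 * r + 5 * u * r"
    assume "\<not> lin N s w \<le> 12 * J + 12 * r + 5 * u * r"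
    then have gap: "lin N s w - B > 0" unfolding B_def by simp
    obtain K where K: "r * (vnorm N w + 1) / (lin N s w - B) < 2^K" using real_arch_pow[of 2] by auto
    have "eps K * vnorm N w < lin N s w - B"
    proof -
      have "r * (vnorm N w + 1) < 2^K * (lin N s w - B)" using K gap by (simp add: divide_less_eq mult.commute)
      then have "r * vnorm N w < 2^K * (lin N s w - B)" using rpos by (simp add: algebra_simps)
      then show ?thesis unfolding eps_def by (simp add: divide_less_eq mult.commute)
    qed
    moreover have "lin N s w \<le> B + eps K * vnorm N w"
      using good_bound[OF w s, of K] thr_sum[OF u, of K] unfolding B_def by simp
    ultimately show False by simp
  qed
  have "lin N t w \<le> 12 * J + 12 * r + 5 * u * r" using main[OF t] .
  moreover have "lin N (\<lambda>i. - t i) w \<le> 12 * J + 12 * r + 5 * u * r" using main[OF Tsym[OF t]] .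
  ultimately show ?thesis by (simp add: lin_neg)
qed

end

definition Tset :: "nat \<Rightarrow> nat \<Rightarrow> (nat \<Rightarrow> nat \<Rightarrow> nat \<Rightarrow> real) \<Rightarrow> (nat \<Rightarrow> nat \<Rightarrow> real) \<Rightarrow> nat \<Rightarrow> (nat \<Rightarrow> real) set" where
  "Tset d N W b L = {mv N d (netmat d N W b x L) z | x z. x \<in> Rn d \<and> z \<in> unit_cball d}"

definition Sf where
  "Sf d N W b L w = (SUP x\<in>Rn d. opnorm 1 d (mm 1 N d (\<lambda>i j. if i = 0 then w j else 0) (netmat d N W b x L)))"

lemma row_val:
  "vnorm 1 (mv 1 d (mm 1 N d (\<lambda>i j. if i = 0 then w j else 0) A) z) = \<bar>lin N (mv N d A z) w\<bar>"
proof -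
  have "mv 1 d (mm 1 N d (\<lambda>i j. if i = 0 then w j else 0) A) z = mv 1 N (\<lambda>i j. if i = 0 then w j else 0) (mv N d A z)"
    by (simp add: mv_mm)
  moreover have "mv 1 N (\<lambda>i j. if i = 0 then w j else 0) (mv N d A z) 0 = lin N (mv N d A z) w"
    by (simp add: mv_def lin_def)
  ultimately show ?thesis by (simp add: vnorm_def)
qed

lemma Rn_ne: "Rn d \<noteq> {}" unfolding Rn_def by auto
lemma cball_ne: "unit_cball d \<noteq> {}" using zero_cball by blast

lemma Lam_nonneg: "0 \<le> (\<Prod>l<L. opnorm N (indim d N l) (W l))"
  by (intro prod_nonneg) (simp add: opnorm_nonneg)

lemma T_bound:
  assumes "1 \<le> L" "t \<in> Tset d N W b L"
  shows "vnorm N t \<le> (\<Prod>l<L. opnorm N (indim d N l) (W l))"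
proof -
  obtain x z where xz: "t = mv N d (netmat d N W b x L) z" "z \<in> unit_cball d" using assms(2) by (auto simp: Tset_def)
  have "vnorm N t \<le> (\<Prod>l<L. opnorm N (indim d N l) (W l)) * vnorm d z" using netmat_bound[OF assms(1)] xz by simp
  also have "\<dots> \<le> (\<Prod>l<L. opnorm N (indim d N l) (W l)) * 1"
    using xz(2) Lam_nonneg by (intro mult_left_mono) (auto simp: unit_cball_def)
  finally show ?thesis by simp
qed

lemma T0: "(\<lambda>i. 0) \<in> Tset d N W b L"
proof -
  have "(\<lambda>i. 0) = mv N d (netmat d N W b (\<lambda>i. 0) L) (\<lambda>i. 0)" by (simp add: mv_zero)
  moreover have "(\<lambda>i. 0::real) \<in> Rn d" by (simp add: Rn_def)
  ultimately show ?thesis unfolding Tset_def using zero_cball by blast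
qed

lemma Tsym: "t \<in> Tset d N W b L \<Longrightarrow> (\<lambda>i. - t i) \<in> Tset d N W b L"
proof -
  assume "t \<in> Tset d N W b L"
  then obtain x z where xz: "t = mv N d (netmat d N W b x L) z" "z \<in> unit_cball d" "x \<in> Rn d" by (auto simp: Tset_def)
  have "(\<lambda>i. - z i) \<in> unit_cball d" using xz(2) by (auto simp: unit_cball_def Rn_def vnorm_minus)
  moreover have "(\<lambda>i. - t i) = mv N d (netmat d N W b x L) (\<lambda>i. - z i)" using xz by (simp add: mv_neg)
  ultimately show ?thesis unfolding Tset_def using xz(3) by blast
qed

lemma S_le:
  assumes "\<And>t. t \<in> Tset d N W b L \<Longrightarrow> \<bar>lin N t w\<bar> \<le> B"
  shows "Sf d N W b L w \<le> B"
  unfolding Sf_def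
proof (rule cSUP_least[OF Rn_ne])
  fix x assume x: "x \<in> Rn d"
  show "opnorm 1 d (mm 1 N d (\<lambda>i j. if i = 0 then w j else 0) (netmat d N W b x L)) \<le> B"
    unfolding opnorm_def
  proof (rule cSup_least)
    show "(\<lambda>z. vnorm 1 (mv 1 d (mm 1 N d (\<lambda>i j. if i = 0 then w j else 0) (netmat d N W b x L)) z)) ` unit_cball d \<noteq> {}"
      using cball_ne by blast
  next
    fix y assume "y \<in> (\<lambda>z. vnorm 1 (mv 1 d (mm 1 N d (\<lambda>i j. if i = 0 then w j else 0) (netmat d N W b x L)) z)) ` unit_cball d"
    then obtain z where z: "z \<in> unit_cball d" "y = vnorm 1 (mv 1 d (mm 1 N d (\<lambda>i j. if i = 0 then w j else 0) (netmat d N W b x L)) z)"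
      by blast
    have "mv N d (netmat d N W b x L) z \<in> Tset d N W b L" unfolding Tset_def using x z(1) by blast
    moreover have "y = \<bar>lin N (mv N d (netmat d N W b x L) z) w\<bar>" using z(2) by (simp only: row_val)
    ultimately show "y \<le> B" using assms by simp
  qed
qed

lemma S_ge:
  assumes L: "1 \<le> L" and S: "Sf d N W b L w \<le> B" and t: "t \<in> Tset d N W b L"
  shows "\<bar>lin N t w\<bar> \<le> B"
proof -
  define \<Lambda> where "\<Lambda> = (\<Prod>l<L. opnorm N (indim d N l) (W l))"
  obtain x z where xz: "t = mv N d (netmat d N W b x L) z" "z \<in> unit_cball d" "x \<in> Rn d"
    using t by (auto simp: Tset_def)
  let ?g = "\<lambda>x z. vnorm 1 (mv 1 d (mm 1 N d (\<lambda>i j. if i = 0 then w j else 0) (netmat d N W b x L)) z)"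
  have gb: "?g x' z' \<le> \<Lambda> * vnorm N w" if "z' \<in> unit_cball d" for x' z'
  proof -
    have "vnorm N (mv N d (netmat d N W b x' L) z') \<le> \<Lambda> * vnorm d z'"
      using netmat_bound[OF L] \<Lambda>_def by blast
    also have "\<dots> \<le> \<Lambda> * 1"
      using that Lam_nonneg \<Lambda>_def by (intro mult_left_mono) (auto simp: unit_cball_def)
    finally have "vnorm N (mv N d (netmat d N W b x' L) z') \<le> \<Lambda>" by simp
    moreover have "?g x' z' = \<bar>lin N (mv N d (netmat d N W b x' L) z') w\<bar>" by (simp only: row_val)
    moreover have "\<bar>lin N (mv N d (netmat d N W b x' L) z') w\<bar> \<le> vnorm N (mv N d (netmat d N W b x' L) z') * vnorm N w"
      by (rule lin_CS)
    moreover have "vnorm N (mv N d (netmat d N W b x' L) z') * vnorm N w \<le> \<Lambda> * vnorm N w"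
      using calculation(1) vnorm_nonneg[of N w] by (rule mult_right_mono)
    ultimately show ?thesis by linarith
  qed
  have bddin: "bdd_above (?g x' ` unit_cball d)" for x'
    using gb by (auto simp: bdd_above_def)
  have opb: "opnorm 1 d (mm 1 N d (\<lambda>i j. if i = 0 then w j else 0) (netmat d N W b x' L)) \<le> \<Lambda> * vnorm N w" for x'
    unfolding opnorm_def by (rule cSup_least) (use cball_ne gb in auto)
  have bddout: "bdd_above ((\<lambda>x. opnorm 1 d (mm 1 N d (\<lambda>i j. if i = 0 then w j else 0) (netmat d N W b x L))) ` Rn d)"
    using opb by (auto simp: bdd_above_def)
  have "\<bar>lin N t w\<bar> = ?g x z" using xz by (simp only: row_val)
  also have "\<dots> \<le> opnorm 1 d (mm 1 N d (\<lambda>i j. if i = 0 then w j else 0) (netmat d N W b x L))"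
    unfolding opnorm_def using xz(2) bddin by (intro cSup_upper) auto
  also have "\<dots> \<le> Sf d N W b L w" unfolding Sf_def using xz(3) bddout by (intro cSUP_upper) auto
  finally show ?thesis using S by simp
qed

lemma meas_all:
  assumes R0: "R \<ge> 0" and bnd: "\<forall>t\<in>T. vnorm N t \<le> R"
  shows "{w \<in> space (gauss_vec N). \<forall>t\<in>T. \<bar>lin N t w\<bar> \<le> B} \<in> sets (gauss_vec N)"
proof -
  define D where "D = (\<lambda>n::nat. SOME F. finite F \<and> F \<subseteq> T \<and> covers N T F (1 / (real n + 1)))"
  have D: "finite (D n) \<and> D n \<subseteq> T \<and> covers N T (D n) (1 / (real n + 1))" for n
  proof -
    have "\<exists>F. finite F \<and> F \<subseteq> T \<and> covers N T F (1 / (real n + 1))"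
      using grid_net[OF _ R0 bnd, of "1 / (real n + 1)"] by auto
    then show ?thesis unfolding D_def by (rule someI_ex)
  qed
  have eq: "{w \<in> space (gauss_vec N). \<forall>t\<in>T. \<bar>lin N t w\<bar> \<le> B}
      = {w \<in> space (gauss_vec N). \<forall>n. \<forall>c\<in>D n. \<bar>lin N c w\<bar> \<le> B}"
  proof (intro equalityI subsetI)
    fix w assume "w \<in> {w \<in> space (gauss_vec N). \<forall>t\<in>T. \<bar>lin N t w\<bar> \<le> B}"
    then show "w \<in> {w \<in> space (gauss_vec N). \<forall>n. \<forall>c\<in>D n. \<bar>lin N c w\<bar> \<le> B}"
      using D by blast
  next
    fix w assume w: "w \<in> {w \<in> space (gauss_vec N). \<forall>n. \<forall>c\<in>D n. \<bar>lin N c w\<bar> \<le> B}"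
    have "\<bar>lin N t w\<bar> \<le> B" if t: "t \<in> T" for t
    proof (rule ccontr)
      assume "\<not> \<bar>lin N t w\<bar> \<le> B"
      then have gap: "\<bar>lin N t w\<bar> - B > 0" by simp
      obtain n where n: "vnorm N w / (\<bar>lin N t w\<bar> - B) < real n" using reals_Archimedean2 by blast
      obtain c where c: "c \<in> D n" "vnorm N (\<lambda>i. t i - c i) \<le> 1 / (real n + 1)" using D[of n] t by blast
      have "\<bar>lin N c w\<bar> \<le> B" using w c(1) by blast
      moreover have "\<bar>lin N (\<lambda>i. t i - c i) w\<bar> \<le> vnorm N w / (real n + 1)"
      proof -
        have "\<bar>lin N (\<lambda>i. t i - c i) w\<bar> \<le> vnorm N (\<lambda>i. t i - c i) * vnorm N w" by (rule lin_CS)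
        also have "\<dots> \<le> 1 / (real n + 1) * vnorm N w" using c(2) vnorm_nonneg by (rule mult_right_mono)
        finally show ?thesis by simp
      qed
      moreover have "vnorm N w / (real n + 1) < \<bar>lin N t w\<bar> - B"
      proof -
        have "vnorm N w < real n * (\<bar>lin N t w\<bar> - B)" using n gap by (simp add: divide_less_eq)
        also have "\<dots> \<le> (real n + 1) * (\<bar>lin N t w\<bar> - B)" using gap by (intro mult_right_mono) auto
        finally show ?thesis by (simp add: divide_less_eq mult.commute)
      qed
      moreover have "\<bar>lin N t w\<bar> \<le> \<bar>lin N c w\<bar> + \<bar>lin N (\<lambda>i. t i - c i) w\<bar>"
        using lin_diff[of N t c w] by linarith
      ultimately show False by linarith
    qed
    then show "w \<in> {w \<in> space (gauss_vec N). \<forall>t\<in>T. \<bar>lin N t w\<bar> \<le> B}" using w by blast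
  qed
  show ?thesis unfolding eq
    by (intro sets.sets_Collect_countable_All sets.sets_Collect_finite_All) (auto simp: D)
qed

lemma main_result:
  fixes d N L :: nat and W :: "nat \<Rightarrow> nat \<Rightarrow> nat \<Rightarrow> real" and b :: "nat \<Rightarrow> nat \<Rightarrow> real" and u :: real
  assumes L: "1 \<le> L" and u: "0 \<le> u"
  defines "\<Lambda> \<equiv> (\<Prod>l<L. opnorm N (indim d N l) (W l))"
  defines "T \<equiv> Tset d N W b L"
  defines "J \<equiv> integral {0..\<Lambda>} (ent N T)"
  shows "measure (gauss_vec N) {w \<in> space (gauss_vec N). Sf d N W b L w \<le> 200 * (J + u * \<Lambda>)} \<ge> 1 - 2 * exp (- (u\<^sup>2))
     \<and> (\<integral>\<^sup>+ w. ennreal (Sf d N W b L w) \<partial>gauss_vec N) \<le> ennreal (200 * J)"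
proof -
  interpret P: prob_space "gauss_vec N" by (rule gauss_prob)
  have \<Lambda>0: "\<Lambda> \<ge> 0" unfolding \<Lambda>_def by (rule Lam_nonneg)
  have bnd: "\<forall>t\<in>T. vnorm N t \<le> \<Lambda>" unfolding T_def \<Lambda>_def using T_bound[OF L] by blast
  have T0': "(\<lambda>i. 0) \<in> T" unfolding T_def by (rule T0)
  have Tne: "T \<noteq> {}" using T0' by blast
  have Jint: "ent N T integrable_on {0..\<Lambda>}" by (rule ent_integrable[OF \<Lambda>0 \<Lambda>0 bnd Tne])
  have J0: "J \<ge> 0" unfolding J_def by (rule integral_nonneg[OF Jint]) (simp add: ent_nonneg)
  have Sle: "Sf d N W b L w \<le> B" if "\<And>t. t \<in> T \<Longrightarrow> \<bar>lin N t w\<bar> \<le> B" for w B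
    using S_le[of d N W b L w B] that unfolding T_def by blast
  have Sset: "{w \<in> space (gauss_vec N). Sf d N W b L w \<le> B} = {w \<in> space (gauss_vec N). \<forall>t\<in>T. \<bar>lin N t w\<bar> \<le> B}" for B
    using Sle S_ge[OF L] unfolding T_def by blast
  have Smeas: "{w \<in> space (gauss_vec N). Sf d N W b L w \<le> B} \<in> sets (gauss_vec N)" for B
    unfolding Sset by (rule meas_all[OF \<Lambda>0 bnd])
  define r where "r = Sup (vnorm N ` T)"
  have bdd: "bdd_above (vnorm N ` T)" using bnd by (auto simp: bdd_above_def)
  have rb: "vnorm N t \<le> r" if "t \<in> T" for t unfolding r_def using bdd that by (intro cSup_upper) auto
  have r0: "r \<ge> 0" using rb[OF T0'] by simp
  have rL: "r \<le> \<Lambda>" unfolding r_def using bnd Tne by (intro cSup_least) auto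
  show ?thesis
  proof (cases "r = 0")
    case True
    have S0: "Sf d N W b L w \<le> 0" for w
    proof (rule Sle)
      fix t assume t: "t \<in> T"
      have "\<bar>lin N t w\<bar> \<le> vnorm N t * vnorm N w" by (rule lin_CS)
      also have "vnorm N t = 0" using rb[OF t] vnorm_nonneg[of N t] True by simp
      finally show "\<bar>lin N t w\<bar> \<le> 0" by simp
    qed
    have "{w \<in> space (gauss_vec N). Sf d N W b L w \<le> 200 * (J + u * \<Lambda>)} = space (gauss_vec N)"
      using S0 J0 u \<Lambda>0 by (auto intro: order_trans[OF S0])
    then have "measure (gauss_vec N) {w \<in> space (gauss_vec N). Sf d N W b L w \<le> 200 * (J + u * \<Lambda>)} = 1"
      using P.prob_space by simp
    moreover have "(\<integral>\<^sup>+ w. ennreal (Sf d N W b L w) \<partial>gauss_vec N) = 0"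
    proof -
      have "\<And>w. ennreal (Sf d N W b L w) = 0" using S0 by (simp add: ennreal_eq_0_iff)
      then show ?thesis by simp
    qed
    ultimately show ?thesis by simp
  next
    case False
    then have rpos: "r > 0" using r0 by simp
    have rsup: "\<exists>t\<in>T. vnorm N t > r / 2"
    proof -
      have "r / 2 < r" using rpos by simp
      then show ?thesis unfolding r_def using less_cSup_iff[OF _ bdd, of "r/2"] Tne r_def by auto
    qed
    have Tsym': "\<And>t. t \<in> T \<Longrightarrow> (\<lambda>i. - t i) \<in> T" unfolding T_def by (rule Tsym)
    interpret C: chain N T r \<Lambda>
      by (intro chain.intro T0' Tsym' rpos rb rsup rL)
    have CJ: "C.J = J" unfolding C.J_def J_def ..
    have good: "Sf d N W b L w \<le> 12 * J + 12 * r + 5 * v * r"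
      if "w \<in> space (gauss_vec N)" "w \<notin> C.Bad v" "v \<ge> 0" for w v
      using Sle C.good_abs[OF that(1,2) _ that(3)] CJ by blast
    have rJ: "r \<le> 5 * J" using C.r_le_J CJ by simp
    have sub: "space (gauss_vec N) - C.Bad u \<subseteq> {w \<in> space (gauss_vec N). Sf d N W b L w \<le> 200 * (J + u * \<Lambda>)}"
    proof
      fix w assume w: "w \<in> space (gauss_vec N) - C.Bad u"
      have "Sf d N W b L w \<le> 12 * J + 12 * r + 5 * u * r" using good[of w u] w u by blast
      also have "\<dots> \<le> 200 * (J + u * \<Lambda>)"
      proof -
        have "u * r \<le> u * \<Lambda>" using rL u by (rule mult_left_mono)
        moreover have "0 \<le> u * \<Lambda>" using u \<Lambda>0 by simp
        moreover have "200 * (J + u * \<Lambda>) = 200 * J + 200 * (u * \<Lambda>)" by (simp add: algebra_simps)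
        moreover have "5 * u * r = 5 * (u * r)" by simp
        ultimately show ?thesis using rJ J0 by linarith
      qed
      finally show "w \<in> {w \<in> space (gauss_vec N). Sf d N W b L w \<le> 200 * (J + u * \<Lambda>)}" using w by blast
    qed
    have "measure (gauss_vec N) (space (gauss_vec N) - C.Bad u) = 1 - measure (gauss_vec N) (C.Bad u)"
      by (rule P.prob_compl[OF C.Bad_sets])
    moreover have "measure (gauss_vec N) (C.Bad u) \<le> exp (- u\<^sup>2)"
      using C.Bad_prob[OF u] by (simp add: P.emeasure_eq_measure)
    moreover have "measure (gauss_vec N) (space (gauss_vec N) - C.Bad u)
        \<le> measure (gauss_vec N) {w \<in> space (gauss_vec N). Sf d N W b L w \<le> 200 * (J + u * \<Lambda>)}"
      by (rule P.finite_measure_mono[OF sub Smeas])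
    moreover have "exp (- u\<^sup>2) \<ge> 0" by simp
    ultimately have part1: "measure (gauss_vec N) {w \<in> space (gauss_vec N). Sf d N W b L w \<le> 200 * (J + u * \<Lambda>)} \<ge> 1 - 2 * exp (- (u\<^sup>2))"
      by linarith
    define a where "a = 12 * J + 12 * r"
    define c where "c = 5 * r"
    have a0: "a \<ge> 0" unfolding a_def using J0 r0 by simp
    have c0: "c > 0" unfolding c_def using rpos by simp
    have meas_ind[measurable]: "C.Bad (real m) \<in> sets (gauss_vec N)" for m by (rule C.Bad_sets)
    have pt: "ennreal (Sf d N W b L w) \<le> ennreal a + ennreal c * (\<Sum>m. indicator (C.Bad (real m)) w)"
      if w: "w \<in> space (gauss_vec N)" for w
    proof -
      obtain M where M: "Sf d N W b L w \<le> a + c * real M" "\<forall>m<M. w \<in> C.Bad (real m)"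
      proof (cases "\<exists>m. w \<notin> C.Bad (real m)")
        case True
        define m0 where "m0 = (LEAST m. w \<notin> C.Bad (real m))"
        have "w \<notin> C.Bad (real m0)" unfolding m0_def using True by (rule LeastI_ex)
        then have "Sf d N W b L w \<le> a + c * real m0" using good[OF w, of "real m0"] by (simp add: a_def c_def mult_ac)
        moreover have "\<forall>m<m0. w \<in> C.Bad (real m)" unfolding m0_def using not_less_Least by blast
        ultimately show ?thesis using that by blast
      next
        case False
        obtain M where "(Sf d N W b L w - a) / c < real M" using reals_Archimedean2 by blast
        then have "Sf d N W b L w \<le> a + c * real M" using c0 by (simp add: divide_less_eq mult.commute)
        then show ?thesis using that False by blast
      qed
      have "ennreal (Sf d N W b L w) \<le> ennreal (a + c * real M)" using M(1) by (rule ennreal_leI)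
      also have "\<dots> = ennreal a + ennreal c * of_nat M"
        using a0 c0 by (simp add: ennreal_plus ennreal_mult ennreal_of_nat_eq_real_of_nat)
      also have "of_nat M = (\<Sum>m<M. indicator (C.Bad (real m)) w :: ennreal)"
        using M(2) by simp
      also have "\<dots> \<le> (\<Sum>m. indicator (C.Bad (real m)) w)"
        by (intro sum_le_suminf) (auto intro: summableI)
      finally show ?thesis by (simp add: add_left_mono mult_left_mono)
    qed
    have "(\<integral>\<^sup>+ w. ennreal (Sf d N W b L w) \<partial>gauss_vec N)
        \<le> (\<integral>\<^sup>+ w. ennreal a + ennreal c * (\<Sum>m. indicator (C.Bad (real m)) w) \<partial>gauss_vec N)"
      by (rule nn_integral_mono) (rule pt)
    also have "\<dots> = ennreal a + ennreal c * (\<Sum>m. emeasure (gauss_vec N) (C.Bad (real m)))"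
      by (simp add: nn_integral_add nn_integral_cmult nn_integral_suminf P.emeasure_space_1)
    also have "(\<Sum>m. emeasure (gauss_vec N) (C.Bad (real m))) \<le> (\<Sum>m. ennreal ((1/2)^m))"
    proof (rule suminf_le)
      fix m :: nat
      have e1: "emeasure (gauss_vec N) (C.Bad (real m)) \<le> ennreal (exp (- (real m)\<^sup>2))" by (rule C.Bad_prob) simp
      have "exp (- (real m)\<^sup>2) \<le> exp (- real m)"
        by (simp add: power2_eq_square) (metis of_nat_le_iff le_square of_nat_mult)
      also have "exp (- real m) \<le> (1/2)^m" by (rule exp_neg_half)
      finally have "ennreal (exp (- (real m)\<^sup>2)) \<le> ennreal ((1/2)^m)" by (rule ennreal_leI)
      with e1 show "emeasure (gauss_vec N) (C.Bad (real m)) \<le> ennreal ((1/2)^m)" by (rule order_trans)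
    qed auto
    also have "(\<Sum>m. ennreal ((1/2::real)^m)) = ennreal 2"
    proof -
      have "(\<Sum>m. ennreal ((1/2::real)^m)) = ennreal (\<Sum>m. (1/2::real)^m)"
        by (intro suminf_ennreal2) auto
      also have "(\<Sum>m. (1/2::real)^m) = 2" using suminf_geometric[of "1/2::real"] by simp
      finally show ?thesis .
    qed
    finally have "(\<integral>\<^sup>+ w. ennreal (Sf d N W b L w) \<partial>gauss_vec N) \<le> ennreal a + ennreal c * ennreal 2"
      by (simp add: add_left_mono mult_left_mono)
    also have "\<dots> = ennreal (a + 2 * c)" using a0 c0 by (simp add: ennreal_plus ennreal_mult mult_ac)
    also have "\<dots> \<le> ennreal (200 * J)"
      using rJ J0 by (intro ennreal_leI) (simp add: a_def c_def)
    finally show ?thesis using part1 by simp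
  qed
qed

theorem proposition5p1:
  shows "\<exists>C::real. C > 0 \<and>
    (\<forall>(d::nat) (N::nat) (L::nat) (W::nat \<Rightarrow> nat \<Rightarrow> nat \<Rightarrow> real) (b::nat \<Rightarrow> nat \<Rightarrow> real) (u::real).
      1 \<le> L \<longrightarrow> 0 \<le> u \<longrightarrow>
      (let \<Lambda> = (\<Prod>l<L. opnorm N (indim d N l) (W l));
           Lset = {mv N d (netmat d N W b x L) z | x z. x \<in> Rn d \<and> z \<in> unit_cball d};
           J = integral {0..\<Lambda>} (\<lambda>\<epsilon>. sqrt (ln (real (covnum N Lset \<epsilon>))));
           S = (\<lambda>w::nat \<Rightarrow> real. SUP x\<in>Rn d.
                  opnorm 1 d (mm 1 N d (\<lambda>i j. if i = 0 then w j else 0) (netmat d N W b x L)))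
       in measure (gauss_vec N) {w \<in> space (gauss_vec N). S w \<le> C * (J + u * \<Lambda>)}
            \<ge> 1 - 2 * exp (- (u\<^sup>2))
        \<and> (\<integral>\<^sup>+ w. ennreal (S w) \<partial>gauss_vec N) \<le> ennreal (C * J)))"
proof (intro exI[of _ "200::real"] conjI allI impI)
  show "(0::real) < 200" by simp
next
  fix d N L :: nat and W :: "nat \<Rightarrow> nat \<Rightarrow> nat \<Rightarrow> real" and b :: "nat \<Rightarrow> nat \<Rightarrow> real" and u :: real
  assume L: "1 \<le> L" and u: "0 \<le> u"
  show "let \<Lambda> = (\<Prod>l<L. opnorm N (indim d N l) (W l));
           Lset = {mv N d (netmat d N W b x L) z | x z. x \<in> Rn d \<and> z \<in> unit_cball d};
           J = integral {0..\<Lambda>} (\<lambda>\<epsilon>. sqrt (ln (real (covnum N Lset \<epsilon>))));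
           S = (\<lambda>w::nat \<Rightarrow> real. SUP x\<in>Rn d.
                  opnorm 1 d (mm 1 N d (\<lambda>i j. if i = 0 then w j else 0) (netmat d N W b x L)))
       in measure (gauss_vec N) {w \<in> space (gauss_vec N). S w \<le> 200 * (J + u * \<Lambda>)}
            \<ge> 1 - 2 * exp (- (u\<^sup>2))
        \<and> (\<integral>\<^sup>+ w. ennreal (S w) \<partial>gauss_vec N) \<le> ennreal (200 * J)"
    using main_result[OF L u] unfolding Let_def Sf_def[abs_def] Tset_def ent_def[abs_def] .
qed

end
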